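(* Let $\mathcal L,\mathcal L'\in\mathfrak o$ and $\beta\in{}_{\mathcal L'}\underline W_{\mathcal L}$. (1) If $\gamma\in{}_{\mathcal L''}\underline W_{\mathcal L'}$, left multiplication by $w^\gamma$ is an isomorphism of posets $(\beta,\le_\beta)\xrightarrow{\sim}(\gamma\beta,\le_{\gamma\beta})$. (2) If $\delta\in{}_{\mathcal L}\underline W_{\mathcal L''}$, right multiplication by $w^\delta$ is an isomorphism of posets $(\beta,\le_\beta)\xrightarrow{\sim}(\beta\delta,\le_{\beta\delta})$. (3) For $w,w'\in\beta$, if $w'\le_\beta w$ then $w'\le w$ in the Bruhat order of $W$.
   Context: $G$ is a connected split reductive group over a finite field, $B\supset T$ a Borel subgroup and split maximal torus, $\Phi^+$ the positive roots, $W=N_G(T)/T$ with simple reflections determined by $B$ and Bruhat order $\le$. $\mathrm{Ch}(T)$: rank-one character sheaves on $T$, with $W$-action $w\mathcal L=(w^{-1})^*\mathcal L$; $\mathfrak o$ a $W$-orbit, $\mathcal L,\mathcal L',\mathcal L''\in\mathfrak o$. $W^\circ_{\mathcal L}$ is the subgroup generated by reflections $r_\alpha$ for roots $\alpha$ with $(\alpha^\vee)^*\mathcal L$ trivial on $\mathbb G_m$; it is a Coxeter group with simple reflections given by the simple roots of $\Phi_{\mathcal L}\cap\Phi^+$, with its own Bruhat order $\le_{W^\circ_{\mathcal L}}$. ${}_{\mathcal L'}W_{\mathcal L}=\{w:w\mathcal L=\mathcal L'\}$; blocks are elements of ${}_{\mathcal L'}\underline W_{\mathcal L}={}_{\mathcal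 L'}W_{\mathcal L}/W^\circ_{\mathcal L}$, with product $\gamma\beta=\{w_1w_2:w_1\in\gamma,w_2\in\beta\}$. Each block $\beta$ has a unique Bruhat-minimal element $w^\beta$ and every element of $\beta$ is uniquely $w^\beta x$, $x\in W^\circ_{\mathcal L}$. The partial order $\le_\beta$ on $\beta$: $w^\beta x'\le_\beta w^\beta x$ iff $x'\le_{W^\circ_{\mathcal L}}x$. *)

theory Defs
  imports Complex_Main "HOL-Computational_Algebra.Primes"
begin

text \<open>Lattices X^*(T), X_*(T) of a split torus of rank CARD('n), both modelled as 'n => int.
 Elements of W = N(T)/T are modelled by their (faithful) action on the cocharacter lattice.\<close>

type_synonym 'n lat = "'n \<Rightarrow> int"
type_synonym 'n wel = "'n lat \<Rightarrow> 'n lat"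

definition pair :: "'n::finite lat \<Rightarrow> 'n lat \<Rightarrow> int" where
  "pair l x = (\<Sum>i\<in>UNIV. l i * x i)"

definition refl_ch :: "'n::finite lat \<Rightarrow> 'n lat \<Rightarrow> 'n lat \<Rightarrow> 'n lat" where
  "refl_ch a ac l = (\<lambda>i. l i - pair l ac * a i)"

definition refl_coch :: "'n::finite lat \<Rightarrow> 'n lat \<Rightarrow> 'n lat \<Rightarrow> 'n lat" where
  "refl_coch a ac x = (\<lambda>i. x i - pair a x * ac i)"

text \<open>Root datum (Springer 7.4.1): roots Phi in X^*, coroot bijection cor onto Phi^vee in X_*.\<close>
definition root_datum :: "'n::finite lat set \<Rightarrow> ('n lat \<Rightarrow> 'n lat) \<Rightarrow> bool" where
  "root_datum Phi cor \<longleftrightarrow> finite Phi \<and> inj_on cor Phi \<and>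
     (\<forall>a\<in>Phi. pair a (cor a) = 2 \<and> refl_ch a (cor a) ` Phi \<subseteq> Phi
               \<and> refl_coch a (cor a) ` (cor ` Phi) \<subseteq> cor ` Phi)"

definition reduced_rd :: "'n::finite lat set \<Rightarrow> bool" where
  "reduced_rd Phi \<longleftrightarrow> (\<forall>a\<in>Phi. (\<lambda>i. 2 * a i) \<notin> Phi)"

text \<open>Positive system (= Borel subgroup containing T): roots positive for a regular real functional.\<close>
definition positive_system :: "'n::finite lat set \<Rightarrow> 'n lat set \<Rightarrow> bool" where
  "positive_system Phi P \<longleftrightarrow> (\<exists>f::'n \<Rightarrow> real.
      (\<forall>a\<in>Phi. (\<Sum>i\<in>UNIV. f i * of_int (a i)) \<noteq> 0) \<and>
      P = {a\<in>Phi. (\<Sum>i\<in>UNIV. f i * of_int (a i)) > 0})"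

definition simple_roots :: "'n lat set \<Rightarrow> 'n lat set" where
  "simple_roots P = {a\<in>P. \<not> (\<exists>b\<in>P. \<exists>c\<in>P. a = (\<lambda>i. b i + c i))}"

definition rrefl :: "('n::finite lat \<Rightarrow> 'n lat) \<Rightarrow> 'n lat \<Rightarrow> 'n wel" where
  "rrefl cor a = refl_coch a (cor a)"

text \<open>Subgroup generated by a set of involutions (finite group: generated monoid).\<close>
inductive_set gen :: "'n wel set \<Rightarrow> 'n wel set" for S where
  gen_id: "id \<in> gen S"
| gen_step: "s \<in> S \<Longrightarrow> w \<in> gen S \<Longrightarrow> s \<circ> w \<in> gen S"

definition clen :: "'n wel set \<Rightarrow> 'n wel \<Rightarrow> nat" where
  "clen S w = (LEAST k. \<exists>ws. length ws = k \<and> set ws \<subseteq> S \<and> foldr (\<circ>) ws id = w)"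

definition crefls :: "'n wel set \<Rightarrow> 'n wel set \<Rightarrow> 'n wel set" where
  "crefls S G = {g \<circ> s \<circ> g' | g s g'. g \<in> G \<and> g' \<in> G \<and> g' \<circ> g = id \<and> s \<in> S}"

definition bruhat :: "'n wel set \<Rightarrow> 'n wel set \<Rightarrow> 'n wel \<Rightarrow> 'n wel \<Rightarrow> bool" where
  "bruhat S G u w \<longleftrightarrow> u \<in> G \<and> w \<in> G \<and>
     (\<lambda>a b. \<exists>t\<in>crefls S G. b = a \<circ> t \<and> clen S a < clen S b)\<^sup>*\<^sup>* u w"

definition Wgrp :: "'n::finite lat set \<Rightarrow> ('n lat \<Rightarrow> 'n lat) \<Rightarrow> 'n wel set" where
  "Wgrp Phi cor = gen {rrefl cor a | a. a \<in> Phi}"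

definition Wsimple :: "('n::finite lat \<Rightarrow> 'n lat) \<Rightarrow> 'n lat set \<Rightarrow> 'n wel set" where
  "Wsimple cor P = {rrefl cor a | a. a \<in> simple_roots P}"

text \<open>Rank-one (tame) character sheaves on T_{F_q-bar}, p = char F_q: homomorphisms
  X_*(T) -> mu_{p'} (roots of unity of order prime to p), coefficients identified with C.\<close>
definition tame_char :: "nat \<Rightarrow> ('n lat \<Rightarrow> complex) \<Rightarrow> bool" where
  "tame_char p L \<longleftrightarrow> (\<forall>x y. L (\<lambda>i. x i + y i) = L x * L y) \<and>
      (\<forall>x. \<exists>m::nat. m > 0 \<and> coprime m p \<and> L x ^ m = 1)"

definition act :: "'n wel \<Rightarrow> ('n lat \<Rightarrow> complex) \<Rightarrow> ('n lat \<Rightarrow> complex)" where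
  "act w L = L \<circ> inv w"

definition PhiL :: "'n::finite lat set \<Rightarrow> ('n lat \<Rightarrow> 'n lat) \<Rightarrow> ('n lat \<Rightarrow> complex) \<Rightarrow> 'n lat set" where
  "PhiL Phi cor L = {a\<in>Phi. L (cor a) = 1}"

definition Wo :: "'n::finite lat set \<Rightarrow> ('n lat \<Rightarrow> 'n lat) \<Rightarrow> ('n lat \<Rightarrow> complex) \<Rightarrow> 'n wel set" where
  "Wo Phi cor L = gen {rrefl cor a | a. a \<in> PhiL Phi cor L}"

definition SL :: "'n::finite lat set \<Rightarrow> ('n lat \<Rightarrow> 'n lat) \<Rightarrow> 'n lat set \<Rightarrow> ('n lat \<Rightarrow> complex) \<Rightarrow> 'n wel set" where
  "SL Phi cor P L = {rrefl cor a | a. a \<in> simple_roots (PhiL Phi cor L \<inter> P)}"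

text \<open>Blocks: {}_{L'}W_L / W^o_L.\<close>
definition blocks :: "'n::finite lat set \<Rightarrow> ('n lat \<Rightarrow> 'n lat) \<Rightarrow> ('n lat \<Rightarrow> complex) \<Rightarrow> ('n lat \<Rightarrow> complex) \<Rightarrow> 'n wel set set" where
  "blocks Phi cor L' L = {(\<lambda>x. w \<circ> x) ` Wo Phi cor L | w. w \<in> Wgrp Phi cor \<and> act w L = L'}"

definition bprod :: "'n wel set \<Rightarrow> 'n wel set \<Rightarrow> 'n wel set" where
  "bprod g b = {w1 \<circ> w2 | w1 w2. w1 \<in> g \<and> w2 \<in> b}"

definition wmin :: "'n::finite lat set \<Rightarrow> ('n lat \<Rightarrow> 'n lat) \<Rightarrow> 'n lat set \<Rightarrow> 'n wel set \<Rightarrow> 'n wel" where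
  "wmin Phi cor P b = (THE u. u \<in> b \<and> (\<forall>w\<in>b. bruhat (Wsimple cor P) (Wgrp Phi cor) u w))"

definition le_blk :: "'n::finite lat set \<Rightarrow> ('n lat \<Rightarrow> 'n lat) \<Rightarrow> 'n lat set \<Rightarrow> ('n lat \<Rightarrow> complex)
     \<Rightarrow> 'n wel set \<Rightarrow> 'n wel \<Rightarrow> 'n wel \<Rightarrow> bool" where
  "le_blk Phi cor P L b u w \<longleftrightarrow> (\<exists>x' x. x' \<in> Wo Phi cor L \<and> x \<in> Wo Phi cor L \<and>
      u = wmin Phi cor P b \<circ> x' \<and> w = wmin Phi cor P b \<circ> x \<and>
      bruhat (SL Phi cor P L) (Wo Phi cor L) x' x)"

end

theory Submission
  imports Defs
begin


section \<open>Linear algebra of the pairing\<close>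

lemma pair_l_diff[simp]: "pair (\<lambda>i. l i - k * m i) x = pair l x - k * pair m x"
  by (simp add: pair_def algebra_simps sum_subtractf sum_distrib_left)
lemma pair_l_add[simp]: "pair (\<lambda>i. l i + k * m i) x = pair l x + k * pair m x"
  by (simp add: pair_def algebra_simps sum.distrib sum_distrib_left)
lemma pair_l_add1[simp]: "pair (\<lambda>i. l i + m i) x = pair l x + pair m x"
  by (simp add: pair_def algebra_simps sum.distrib)
lemma pair_l_diff1[simp]: "pair (\<lambda>i. l i - m i) x = pair l x - pair m x"
  by (simp add: pair_def algebra_simps sum_subtractf)
lemma pair_l_neg[simp]: "pair (\<lambda>i. - l i) x = - pair l x"
  by (simp add: pair_def sum_negf)
lemma pair_l_sm[simp]: "pair (\<lambda>i. k * l i) x = k * pair l x"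
  by (simp add: pair_def algebra_simps sum_distrib_left)
lemma pair_r_diff[simp]: "pair l (\<lambda>i. x i - k * y i) = pair l x - k * pair l y"
  by (simp add: pair_def algebra_simps sum_subtractf sum_distrib_left)
lemma pair_r_add[simp]: "pair l (\<lambda>i. x i + k * y i) = pair l x + k * pair l y"
  by (simp add: pair_def algebra_simps sum.distrib sum_distrib_left)
lemma pair_r_add1[simp]: "pair l (\<lambda>i. x i + y i) = pair l x + pair l y"
  by (simp add: pair_def algebra_simps sum.distrib)
lemma pair_r_diff1[simp]: "pair l (\<lambda>i. x i - y i) = pair l x - pair l y"
  by (simp add: pair_def algebra_simps sum_subtractf)
lemma pair_r_neg[simp]: "pair l (\<lambda>i. - x i) = - pair l x"
  by (simp add: pair_def sum_negf)
lemma pair_r_sm[simp]: "pair l (\<lambda>i. k * x i) = k * pair l x"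
  by (simp add: pair_def algebra_simps sum_distrib_left)
lemma pair_l_sm'[simp]: "pair (\<lambda>i. l i * k) x = k * pair l x"
  by (simp add: pair_def algebra_simps sum_distrib_left)
lemma pair_r_sm'[simp]: "pair l (\<lambda>i. x i * k) = k * pair l x"
  by (simp add: pair_def algebra_simps sum_distrib_left)
lemma pair_l_zero[simp]: "pair (\<lambda>i. 0) x = 0" by (simp add: pair_def)
lemma pair_r_zero[simp]: "pair l (\<lambda>i. 0) = 0" by (simp add: pair_def)

lemma pair_ext:
  fixes l m :: "'n::finite lat"
  assumes "\<And>x. pair l x = pair m x" shows "l = m"
proof
  fix i
  have "pair l (\<lambda>j. if j = i then 1 else 0) = l i" for l :: "'n lat"
    by (simp add: pair_def if_distrib cong: if_cong)
  then show "l i = m i" using assms by metis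
qed

lemma refl_ch_pair: "pair (refl_ch a c l) x = pair l (refl_coch a c x)"
  by (simp add: refl_ch_def refl_coch_def)

lemma refl_ch_invol: "pair a c = 2 \<Longrightarrow> refl_ch a c (refl_ch a c l) = l"
  by (simp add: refl_ch_def fun_eq_iff)
lemma refl_coch_invol: "pair a c = 2 \<Longrightarrow> refl_coch a c (refl_coch a c x) = x"
  by (simp add: refl_coch_def fun_eq_iff)
lemma refl_ch_self: "pair a c = 2 \<Longrightarrow> refl_ch a c a = (\<lambda>i. - a i)"
  by (simp add: refl_ch_def fun_eq_iff algebra_simps)
lemma refl_coch_self: "pair a c = 2 \<Longrightarrow> refl_coch a c c = (\<lambda>i. - c i)"
  by (simp add: refl_coch_def fun_eq_iff algebra_simps)

lemma inj_range_infinite: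
  fixes g :: "nat \<Rightarrow> 'a"
  assumes "inj g" "range g \<subseteq> S" shows "\<not> finite S"
  using assms finite_imageD finite_subset infinite_UNIV_nat by blast

locale rd =
  fixes Phi :: "'n::finite lat set" and cor :: "'n lat \<Rightarrow> 'n lat"
    and P :: "'n lat set" and f :: "'n \<Rightarrow> real"
  assumes RD: "root_datum Phi cor" and RED: "reduced_rd Phi"
    and Fne: "\<And>a. a \<in> Phi \<Longrightarrow> (\<Sum>i\<in>UNIV. f i * of_int (a i)) \<noteq> 0"
    and Pdef: "P = {a\<in>Phi. (\<Sum>i\<in>UNIV. f i * of_int (a i)) > 0}"
begin

definition F :: "'n lat \<Rightarrow> real" where "F a = (\<Sum>i\<in>UNIV. f i * of_int (a i))"

lemma F_diff[simp]: "F (\<lambda>i. l i - k * m i) = F l - of_int k * F m"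
  by (simp add: F_def algebra_simps sum_subtractf sum_distrib_left)
lemma F_add1[simp]: "F (\<lambda>i. l i + m i) = F l + F m"
  by (simp add: F_def algebra_simps sum.distrib)
lemma F_diff1[simp]: "F (\<lambda>i. l i - m i) = F l - F m"
  by (simp add: F_def algebra_simps sum_subtractf)
lemma F_neg[simp]: "F (\<lambda>i. - l i) = - F l"
  by (simp add: F_def sum_negf)

lemma P_iff: "a \<in> P \<longleftrightarrow> a \<in> Phi \<and> F a > 0"
  using Pdef by (auto simp: F_def)
lemma Fne': "a \<in> Phi \<Longrightarrow> F a \<noteq> 0" using Fne by (simp add: F_def)
lemma P_sub: "P \<subseteq> Phi" using P_iff by auto

lemma fin: "finite Phi" using RD by (simp add: root_datum_def)
lemma injc: "inj_on cor Phi" using RD by (simp add: root_datum_def)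
lemma two: "a \<in> Phi \<Longrightarrow> pair a (cor a) = 2" using RD by (simp add: root_datum_def)
lemma clos: "a \<in> Phi \<Longrightarrow> b \<in> Phi \<Longrightarrow> refl_ch a (cor a) b \<in> Phi"
  using RD by (auto simp: root_datum_def)
lemma closc: "a \<in> Phi \<Longrightarrow> b \<in> Phi \<Longrightarrow> \<exists>c\<in>Phi. refl_coch a (cor a) (cor b) = cor c"
  using RD unfolding root_datum_def by (metis (no_types, lifting) image_iff image_subset_iff)
lemma neg_in: "a \<in> Phi \<Longrightarrow> (\<lambda>i. - a i) \<in> Phi"
  using clos[of a a] two[of a] refl_ch_self[of a "cor a"] by simp
lemma red: "a \<in> Phi \<Longrightarrow> (\<lambda>i. 2 * a i) \<notin> Phi"
  using RED by (simp add: reduced_rd_def)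

lemma negP: "a \<in> Phi \<Longrightarrow> (\<lambda>i. - a i) \<in> P \<longleftrightarrow> a \<notin> P"
  using Fne'[of a] neg_in[of a] by (auto simp: P_iff)

lemma compat:
  assumes a: "a \<in> Phi" and b: "b \<in> Phi"
  shows "cor (refl_ch b (cor b) a) = refl_coch b (cor b) (cor a)"
proof -
  define a' where "a' = refl_ch b (cor b) a"
  define c where "c = refl_coch b (cor b) (cor a)"
  have a'P: "a' \<in> Phi" using clos a b a'_def by auto
  obtain d where d: "d \<in> Phi" "c = cor d" using closc[OF b a] c_def by auto
  have pa: "pair a' c = 2"
    unfolding a'_def c_def refl_ch_pair using refl_coch_invol two a b by (simp add: refl_coch_invol)
  have pd: "pair d c = 2" using d two by simp
  define e where "e = (\<lambda>i. a' i - d i)"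
  have pe: "pair e c = 0" using pa pd e_def by simp
  have teq: "(\<lambda>i. l i - pair l c * a' i) = refl_ch b (cor b) (refl_ch a (cor a) (refl_ch b (cor b) l))" for l
    unfolding a'_def c_def using two[OF b]
    apply (simp add: fun_eq_iff refl_ch_def refl_coch_def)
    apply (simp add: algebra_simps)
    done
  have tP: "l \<in> Phi \<Longrightarrow> (\<lambda>i. l i - pair l c * a' i) \<in> Phi" for l
    unfolding teq using clos a b by simp
  have sP: "l \<in> Phi \<Longrightarrow> (\<lambda>i. l i - pair l c * d i) \<in> Phi" for l
    using clos[OF d(1), of l] d(2) by (simp add: refl_ch_def)
  have inP: "(\<lambda>i. a' i + 2 * int n * e i) \<in> Phi" for n
  proof (induction n)
    case 0 then show ?case using a'P by simp
  next
    case (Suc n)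
    define x where "x = (\<lambda>i. a' i + 2 * int n * e i)"
    have px: "pair x c = 2" unfolding x_def using pa pe
      by (simp add: mult.assoc)
    define y where "y = (\<lambda>i. x i - pair x c * d i)"
    have yP: "y \<in> Phi" unfolding y_def by (rule sP) (use Suc x_def in simp)
    have py: "pair y c = -2" unfolding y_def using px pd by simp
    have "(\<lambda>i. y i - pair y c * a' i) \<in> Phi" using tP yP by simp
    moreover have "(\<lambda>i. y i - pair y c * a' i) = (\<lambda>i. a' i + 2 * int (Suc n) * e i)"
      unfolding py y_def px x_def e_def
      apply (rule ext)
      apply (simp add: pa pd)
      apply algebra
      done
    ultimately show ?case by simp
  qed
  have "e = (\<lambda>i. 0)"
  proof (rule ccontr)
    assume "e \<noteq> (\<lambda>i. 0)"
    then obtain i where ei: "e i \<noteq> 0" by auto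
    have "inj (\<lambda>n. (\<lambda>i. a' i + 2 * int n * e i))"
    proof (rule injI)
      fix n m assume "(\<lambda>i. a' i + 2 * int n * e i) = (\<lambda>i. a' i + 2 * int m * e i)"
      then have "a' i + 2 * int n * e i = a' i + 2 * int m * e i" by metis
      then show "n = m" using ei by simp
    qed
    then show False using inj_range_infinite[of _ Phi] inP fin by blast
  qed
  then have "a' = d" unfolding e_def by (simp add: fun_eq_iff)
  then show ?thesis using d a'_def c_def by simp
qed

end



context rd begin

definition B :: "'n lat \<Rightarrow> 'n lat \<Rightarrow> int" where
  "B l m = (\<Sum>a\<in>Phi. pair l (cor a) * pair m (cor a))"

lemma B_sym: "B l m = B m l" by (simp add: B_def mult.commute)
lemma B_l_diff[simp]: "B (\<lambda>i. l i - k * m i) x = B l x - k * B m x"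
  by (simp add: B_def algebra_simps sum_subtractf sum_distrib_left)
lemma B_r_diff[simp]: "B x (\<lambda>i. l i - k * m i) = B x l - k * B x m"
  by (simp add: B_def algebra_simps sum_subtractf sum_distrib_left)
lemma B_l_neg[simp]: "B (\<lambda>i. - l i) x = - B l x"
  by (simp add: B_def sum_negf)
lemma B_r_neg[simp]: "B x (\<lambda>i. - l i) = - B x l"
  by (simp add: B_def sum_negf)
lemma B_l_lc[simp]: "B (\<lambda>i. p * l i - q * m i) x = p * B l x - q * B m x"
  by (simp add: B_def algebra_simps sum_subtractf sum_distrib_left)
lemma B_r_lc[simp]: "B x (\<lambda>i. p * l i - q * m i) = p * B x l - q * B x m"
  by (simp add: B_def algebra_simps sum_subtractf sum_distrib_left)

lemma sc_inj: "b \<in> Phi \<Longrightarrow> inj_on (refl_ch b (cor b)) Phi"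
  by (metis inj_onI refl_ch_invol two)
lemma sc_img: "b \<in> Phi \<Longrightarrow> refl_ch b (cor b) ` Phi = Phi"
proof
  assume b: "b \<in> Phi"
  show "refl_ch b (cor b) ` Phi \<subseteq> Phi" using clos b by auto
  show "Phi \<subseteq> refl_ch b (cor b) ` Phi"
  proof
    fix x assume "x \<in> Phi"
    then show "x \<in> refl_ch b (cor b) ` Phi"
      using clos[OF b, of x] refl_ch_invol[OF two[OF b]] by (metis image_eqI)
  qed
qed

lemma B_inv:
  assumes b: "b \<in> Phi"
  shows "B (refl_ch b (cor b) l) (refl_ch b (cor b) m) = B l m"
proof -
  let ?g = "\<lambda>a. pair l (cor a) * pair m (cor a)"
  have "B (refl_ch b (cor b) l) (refl_ch b (cor b) m) = (\<Sum>a\<in>Phi. ?g (refl_ch b (cor b) a))"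
    unfolding B_def refl_ch_pair by (intro sum.cong refl) (simp add: compat b)
  also have "\<dots> = sum ?g (refl_ch b (cor b) ` Phi)"
    by (rule sum.reindex[symmetric, unfolded comp_def]) (rule sc_inj[OF b])
  also have "\<dots> = B l m" unfolding sc_img[OF b] B_def ..
  finally show ?thesis .
qed

lemma B_form: assumes b: "b \<in> Phi" shows "2 * B l b = pair l (cor b) * B b b"
proof -
  have "B (refl_ch b (cor b) l) (\<lambda>i. - b i) = B l b"
    using B_inv[OF b, of l b] refl_ch_self[OF two[OF b]] by simp
  then have "B (\<lambda>i. l i - pair l (cor b) * b i) (\<lambda>i. - b i) = B l b"
    by (simp add: refl_ch_def)
  then have "- (B l b - pair l (cor b) * B b b) = B l b"
    by (simp only: B_l_diff B_r_neg)
  then show ?thesis by linarith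
qed

lemma B_pos: assumes b: "b \<in> Phi" shows "4 \<le> B b b"
proof -
  have "pair b (cor b) * pair b (cor b) \<le> B b b"
    unfolding B_def by (rule member_le_sum) (use b fin in auto)
  then show ?thesis using two[OF b] by simp
qed

lemma B_nonneg: "0 \<le> B l l" unfolding B_def by (intro sum_nonneg) auto

lemma B_CS: assumes "B y y > 0" shows "B x y * B x y \<le> B x x * B y y"
proof -
  have "0 \<le> B (\<lambda>i. B y y * x i - B x y * y i) (\<lambda>i. B y y * x i - B x y * y i)"
    by (rule B_nonneg)
  also have "\<dots> = B y y * (B x x * B y y - B x y * B x y)"
    by (simp only: B_l_lc B_r_lc) (simp add: algebra_simps B_sym[of y x])
  finally show ?thesis using assms by (simp add: zero_le_mult_iff)
qed

lemma no_mult: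
  assumes a: "a \<in> Phi" and j: "j \<ge> 2" and ja: "(\<lambda>i. j * a i) \<in> Phi"
  shows False
proof -
  have "2 = pair (\<lambda>i. j * a i) (cor (\<lambda>i. j * a i))" using two[OF ja] by simp
  also have "\<dots> = j * pair a (cor (\<lambda>i. j * a i))" by simp
  finally have e: "j * pair a (cor (\<lambda>i. j * a i)) = 2" by simp
  define x where "x = pair a (cor (\<lambda>i. j * a i))"
  have e': "j * x = 2" using e x_def by simp
  have "0 < j * x" using e' by simp
  then have "x > 0" using j by (simp add: zero_less_mult_iff)
  have "x = 1"
  proof (rule ccontr)
    assume "x \<noteq> 1" then have "x \<ge> 2" using \<open>x > 0\<close> by simp
    then have "j * x \<ge> 2 * 2" using j by (intro mult_mono) auto
    then show False using e' by simp
  qed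
  then have "j = 2" using e' by simp
  then show False using red[OF a] ja by simp
qed

lemma unipotent:
  assumes a: "a \<in> Phi" and g: "g \<in> Phi"
    and pq: "pair a (cor g) * pair g (cor a) = 4" and p0: "pair a (cor g) > 0"
  shows "g = a"
proof -
  define p where "p = pair a (cor g)"
  define q where "q = pair g (cor a)"
  have pq': "p * q = 4" using pq p_def q_def by simp
  define v where "v = (\<lambda>i. 2 * a i - p * g i)"
  have pv: "pair v (cor g) = 0" unfolding v_def p_def using two[OF g] by simp
  have pva: "pair v (cor a) = 0" unfolding v_def using two[OF a] pq' q_def by simp
  have inP: "(\<lambda>i. a i + int n * v i) \<in> Phi" for n
  proof (induction n)
    case 0 then show ?case using a by simp
  next
    case (Suc n)
    define x where "x = (\<lambda>i. a i + int n * v i)"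
    have px: "pair x (cor g) = p" unfolding x_def using pv p_def by simp
    have pxa: "pair x (cor a) = 2" unfolding x_def using pva two[OF a] by simp
    define y where "y = (\<lambda>i. x i - p * g i)"
    have yP: "y \<in> Phi" using clos[OF g, of x] Suc px unfolding x_def y_def refl_ch_def
      by simp
    have py: "pair y (cor a) = -2" unfolding y_def using pxa pq' q_def by simp
    have "refl_ch a (cor a) y \<in> Phi" using clos[OF a yP] .
    moreover have "refl_ch a (cor a) y = (\<lambda>i. a i + int (Suc n) * v i)"
      unfolding refl_ch_def py unfolding y_def x_def v_def
      by (rule ext) (simp add: algebra_simps)
    ultimately show ?case by simp
  qed
  have v0: "v = (\<lambda>i. 0)"
  proof (rule ccontr)
    assume "v \<noteq> (\<lambda>i. 0)"
    then obtain i where ei: "v i \<noteq> 0" by auto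
    have "inj (\<lambda>n. (\<lambda>i. a i + int n * v i))"
    proof (rule injI)
      fix n m assume "(\<lambda>i. a i + int n * v i) = (\<lambda>i. a i + int m * v i)"
      then have "a i + int n * v i = a i + int m * v i" by metis
      then show "n = m" using ei by simp
    qed
    then show False using inj_range_infinite[of _ Phi] inP fin by blast
  qed
  have vv: "2 * a i = p * g i" for i
  proof -
    have "2 * a i - p * g i = 0" using fun_cong[OF v0, of i] v_def by simp
    then show ?thesis by simp
  qed
  have "0 < p * q" using pq' by simp
  then have "q > 0" using p0 p_def by (simp add: zero_less_mult_iff)
  have "p \<le> 4" using pq' \<open>q > 0\<close> by (smt (verit) mult_le_cancel_left1)
  have "p \<noteq> 3"
  proof
    assume "p = 3" with pq' have "3 * q = 4" by simp
    then show False by presburger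
  qed
  then have "p = 1 \<or> p = 2 \<or> p = 4" using \<open>p \<le> 4\<close> p0 p_def by auto
  moreover
  { assume "p = 1" then have "g = (\<lambda>i. 2 * a i)" using vv by (simp add: fun_eq_iff)
    then have False using red[OF a] g by simp }
  moreover
  { assume "p = 4" then have "a = (\<lambda>i. 2 * g i)" using vv by (simp add: fun_eq_iff)
    then have False using red[OF g] a by simp }
  ultimately have "p = 2" by blast
  then show "g = a" using vv by (simp add: fun_eq_iff)
qed

lemma R2:
  assumes a: "a \<in> Phi" and g: "g \<in> Phi" and ne: "g \<noteq> a" and q0: "pair g (cor a) > 0"
  shows "pair g (cor a) = 1 \<or> pair a (cor g) = 1"
proof -
  define p where "p = pair a (cor g)"
  define q where "q = pair g (cor a)"
  have Ba: "B a a \<ge> 4" and Bg: "B g g \<ge> 4" using B_pos a g by auto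
  have f1: "2 * B g a = q * B a a" using B_form[OF a] q_def by simp
  have f2: "2 * B a g = p * B g g" using B_form[OF g] p_def by simp
  have "q * B a a > 0" using q0 q_def Ba by simp
  then have "B g a > 0" using f1 by linarith
  then have "p * B g g > 0" using f2 B_sym[of a g] by linarith
  then have "p > 0" using Bg by (simp add: zero_less_mult_iff)
  have "(2 * B a g) * (2 * B g a) = (p * B g g) * (q * B a a)" using f1 f2 by simp
  then have "4 * (B a g * B a g) = (p * q) * (B a a * B g g)"
    using B_sym[of a g] by (simp add: algebra_simps)
  moreover have "B a g * B a g \<le> B a a * B g g" using B_CS Bg by simp
  ultimately have "(p * q) * (B a a * B g g) \<le> 4 * (B a a * B g g)" by simp
  moreover have "B a a * B g g > 0" using Ba Bg by simp
  ultimately have "p * q \<le> 4" by (meson mult_right_le_imp_le)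
  moreover have "p * q \<noteq> 4" using unipotent[OF a g] ne \<open>p > 0\<close> p_def q_def by auto
  ultimately have pq3: "p * q \<le> 3" by simp
  have "p = 1 \<or> q = 1"
  proof (rule ccontr)
    assume "\<not> (p = 1 \<or> q = 1)"
    then have "p \<ge> 2" "q \<ge> 2" using \<open>p > 0\<close> q0 q_def by auto
    then have "p * q \<ge> 2 * 2" by (intro mult_mono) auto
    then show False using pq3 by simp
  qed
  then show ?thesis using p_def q_def by auto
qed

end



section \<open>Subsystems and the key lemma on simple reflections\<close>

locale sub = rd +
  fixes Psi :: "'a lat set"
  assumes Psub: "Psi \<subseteq> Phi"
    and Pclos: "\<And>a b. a \<in> Psi \<Longrightarrow> b \<in> Psi \<Longrightarrow> refl_ch a (cor a) b \<in> Psi"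
begin

lemma PsiPhi: "a \<in> Psi \<Longrightarrow> a \<in> Phi" using Psub by auto

lemma Psi_neg: "a \<in> Psi \<Longrightarrow> (\<lambda>i. - a i) \<in> Psi"
  using Pclos[of a a] refl_ch_self[OF two[OF PsiPhi]] by simp

lemma R2Psi:
  assumes a: "a \<in> Psi" and g: "g \<in> Psi" and ne: "g \<noteq> a" and q0: "pair g (cor a) > 0"
  shows "(\<lambda>i. g i - a i) \<in> Psi"
proof -
  from R2[OF PsiPhi[OF a] PsiPhi[OF g] ne q0]
  show ?thesis
  proof
    assume "pair g (cor a) = 1"
    then show ?thesis using Pclos[OF a g] by (simp add: refl_ch_def)
  next
    assume "pair a (cor g) = 1"
    then have "(\<lambda>i. a i - g i) \<in> Psi" using Pclos[OF g a] by (simp add: refl_ch_def)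
    from Psi_neg[OF this] show ?thesis by simp
  qed
qed

definition Dl where "Dl = simple_roots (Psi \<inter> P)"

lemma Dl_iff: "a \<in> Dl \<longleftrightarrow> a \<in> Psi \<inter> P \<and> \<not> (\<exists>b\<in>Psi \<inter> P. \<exists>c\<in>Psi \<inter> P. a = (\<lambda>i. b i + c i))"
  by (simp add: Dl_def simple_roots_def)

lemma claimC:
  assumes al: "al \<in> Dl"
  shows "b \<in> Psi \<inter> P \<Longrightarrow> g \<in> Psi \<inter> P \<Longrightarrow> b \<noteq> al \<Longrightarrow>
     (\<lambda>i. b i + g i) = (\<lambda>i. int m * al i) \<Longrightarrow> m \<ge> 1 \<Longrightarrow> False"
proof (induction m arbitrary: b g)
  case 0 then show ?case by simp
next
  case (Suc m)
  have alP: "al \<in> Psi" "al \<in> P" "al \<in> Phi" using al Dl_iff PsiPhi by auto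
  show False
  proof (cases "m = 0")
    case True
    then have "al = (\<lambda>i. b i + g i)" using Suc.prems(4) by (simp add: fun_eq_iff)
    then have "\<exists>bb\<in>Psi \<inter> P. \<exists>cc\<in>Psi \<inter> P. al = (\<lambda>i. bb i + cc i)"
      using Suc.prems(1,2) by (intro bexI[where x=b] bexI[where x=g]) auto
    then show False using al Dl_iff by simp
  next
    case False
    then have m1: "m \<ge> 1" by simp
    show False
    proof (cases "g = al")
      case True
      then have bm: "b = (\<lambda>i. int m * al i)" using Suc.prems(4)
        by (auto simp: fun_eq_iff algebra_simps dest: fun_cong)
      show False
      proof (cases "m = 1")
        case True then show False using bm Suc.prems(3) by simp
      next
        case False
        then have "int m \<ge> 2" using m1 by simp
        moreover have "b \<in> Phi" using Suc.prems(1) PsiPhi by simp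
        then have "(\<lambda>i. int m * al i) \<in> Phi" by (simp only: bm)
        ultimately show False using no_mult[OF alP(3)] by blast
      qed
    next
      case gne: False
      have "pair (\<lambda>i. b i + g i) (cor al) = int (Suc m) * 2"
        unfolding Suc.prems(4) using two[OF alP(3)] by simp
      then have sum: "pair b (cor al) + pair g (cor al) = int (Suc m) * 2" by simp
      have bP: "b \<in> Psi" "b \<in> P" "g \<in> Psi" "g \<in> P" using Suc.prems by auto
      have nneg: "x \<in> P \<Longrightarrow> x \<noteq> (\<lambda>i. - al i)" for x
        using negP[OF alP(3)] alP(2) by auto
      have step: "x \<in> Psi \<Longrightarrow> x \<in> P \<Longrightarrow> x \<noteq> al \<Longrightarrow> pair x (cor al) > 0 \<Longrightarrow>
                  (\<lambda>i. x i - al i) \<in> Psi \<inter> P \<and> (\<lambda>i. x i - al i) \<noteq> al" for x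
      proof -
        assume x: "x \<in> Psi" "x \<in> P" "x \<noteq> al" "pair x (cor al) > 0"
        have xa: "(\<lambda>i. x i - al i) \<in> Psi" using R2Psi[OF alP(1) x(1) x(3) x(4)] .
        have xaP: "(\<lambda>i. x i - al i) \<in> P"
        proof (rule ccontr)
          assume "(\<lambda>i. x i - al i) \<notin> P"
          then have "(\<lambda>i. - (x i - al i)) \<in> P" using negP[OF PsiPhi[OF xa]] by simp
          moreover have "(\<lambda>i. - (x i - al i)) \<in> Psi" using Psi_neg[OF xa] .
          ultimately have "\<exists>bb\<in>Psi \<inter> P. \<exists>cc\<in>Psi \<inter> P. al = (\<lambda>i. bb i + cc i)"
            using x by (intro bexI[where x=x] bexI[where x="\<lambda>i. - (x i - al i)"]) auto
          then show False using al Dl_iff by simp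
        qed
        have "(\<lambda>i. x i - al i) \<noteq> al"
        proof
          assume "(\<lambda>i. x i - al i) = al"
          then have "x = (\<lambda>i. 2 * al i)" by (auto simp: fun_eq_iff dest: fun_cong)
          then show False using red[OF alP(3)] x PsiPhi by auto
        qed
        then show ?thesis using xa xaP by auto
      qed
      show False
      proof (cases "pair b (cor al) > 0")
        case True
        from step[OF bP(1,2) Suc.prems(3) True]
        have b': "(\<lambda>i. b i - al i) \<in> Psi \<inter> P" "(\<lambda>i. b i - al i) \<noteq> al" by auto
        have "(\<lambda>i. (b i - al i) + g i) = (\<lambda>i. int m * al i)"
          using Suc.prems(4) by (auto simp: fun_eq_iff algebra_simps dest: fun_cong)
        then show False using Suc.IH[OF b'(1) Suc.prems(2) b'(2) _ m1] by simp
      next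
        case False
        then have "pair g (cor al) > 0" using sum by simp
        from step[OF bP(3,4) gne this]
        have g': "(\<lambda>i. g i - al i) \<in> Psi \<inter> P" by auto
        have "(\<lambda>i. b i + (g i - al i)) = (\<lambda>i. int m * al i)"
          using Suc.prems(4) by (auto simp: fun_eq_iff algebra_simps dest: fun_cong)
        then show False using Suc.IH[OF Suc.prems(1) g' Suc.prems(3) _ m1] by simp
      qed
    qed
  qed
qed

lemma L2:
  assumes al: "al \<in> Dl" and b: "b \<in> Psi \<inter> P" and ne: "b \<noteq> al"
  shows "refl_ch al (cor al) b \<in> P"
proof -
  have alP: "al \<in> Psi" "al \<in> P" "al \<in> Phi" using al Dl_iff PsiPhi by auto
  define k where "k = pair b (cor al)"
  have sb: "refl_ch al (cor al) b = (\<lambda>i. b i - k * al i)" by (simp add: refl_ch_def k_def)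
  have sbPsi: "refl_ch al (cor al) b \<in> Psi" using Pclos alP b by auto
  show ?thesis
  proof (cases "k \<le> 0")
    case True
    have "F al > 0" "F b > 0" using alP(2) b P_iff by auto
    moreover have "real_of_int k * F al \<le> 0" using True \<open>F al > 0\<close>
      by (simp add: mult_nonpos_nonneg)
    ultimately have "F (\<lambda>i. b i - k * al i) > 0" by simp
    then show ?thesis using sb sbPsi PsiPhi P_iff by auto
  next
    case False
    show ?thesis
    proof (rule ccontr)
      assume "refl_ch al (cor al) b \<notin> P"
      then have gP: "(\<lambda>i. - (b i - k * al i)) \<in> P" using negP[OF PsiPhi[OF sbPsi]] sb by simp
      have gPsi: "(\<lambda>i. - (b i - k * al i)) \<in> Psi" using Psi_neg[OF sbPsi] sb by simp
      have "(\<lambda>i. b i + (- (b i - k * al i))) = (\<lambda>i. int (nat k) * al i)" using False by simp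
      moreover have "(\<lambda>i. - (b i - k * al i)) \<in> Psi \<inter> P" using gP gPsi by simp
      moreover have "(\<lambda>i. b i + (- (b i - k * al i))) = (\<lambda>i. int (nat k) * al i)" 
        using False by simp
      moreover have "nat k \<ge> 1" using False by simp
      ultimately show False using claimC[OF al b _ ne, where m="nat k"] by blast
    qed
  qed
qed

end



section \<open>Generated groups\<close>

lemma gen_S: "s \<in> S \<Longrightarrow> s \<in> gen S"
  using gen.gen_step[OF _ gen.gen_id, of s S] comp_id by metis

lemma gen_comp: "u \<in> gen S \<Longrightarrow> v \<in> gen S \<Longrightarrow> u \<circ> v \<in> gen S"
proof (induction u rule: gen.induct)
  case gen_id then show ?case by (metis id_comp)
next
  case (gen_step s w) then show ?case using gen.gen_step[of s S "w \<circ> v"] by (metis comp_assoc)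
qed

lemma gen_mono: assumes "S \<subseteq> T" shows "gen S \<subseteq> gen T"
proof
  fix u assume "u \<in> gen S" then show "u \<in> gen T"
  proof (induction u rule: gen.induct)
    case gen_id show ?case by (rule gen.gen_id)
  next
    case (gen_step s w) then show ?case using assms by (blast intro: gen.gen_step)
  qed
qed

lemma gen_inv:
  assumes inv: "\<And>t. t \<in> S \<Longrightarrow> t \<circ> t = id"
  shows "u \<in> gen S \<Longrightarrow> \<exists>u'\<in>gen S. u' \<circ> u = id \<and> u \<circ> u' = id"
proof (induction u rule: gen.induct)
  case gen_id then show ?case using gen.gen_id[of S] by (metis comp_id)
next
  case (gen_step s w)
  then obtain w' where w': "w' \<in> gen S" "w' \<circ> w = id" "w \<circ> w' = id" by blast
  have "w' \<circ> s \<in> gen S" using gen_comp[OF w'(1) gen_S[OF gen_step(1)]] .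
  moreover have "(w' \<circ> s) \<circ> (s \<circ> w) = id"
    using inv[OF gen_step(1)] w'(2) by (metis comp_assoc comp_id)
  moreover have "(s \<circ> w) \<circ> (w' \<circ> s) = id"
    using inv[OF gen_step(1)] w'(3) by (metis comp_assoc comp_id)
  ultimately show ?case by blast
qed

lemma gen_foldr: "set ws \<subseteq> S \<Longrightarrow> foldr (\<circ>) ws id \<in> gen S"
  by (induction ws) (auto intro: gen.intros)

lemma foldr_cons_comp: "foldr (\<circ>) (s # ws) id = s \<circ> foldr (\<circ>) ws id" by simp

lemma gen_word: "u \<in> gen S \<Longrightarrow> \<exists>ws. set ws \<subseteq> S \<and> foldr (\<circ>) ws id = u"
proof (induction u rule: gen.induct)
  case gen_id then show ?case by (intro exI[of _ "[]"]) auto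
next
  case (gen_step s w)
  then obtain ws where ws: "set ws \<subseteq> S" "foldr (\<circ>) ws id = w" by blast
  have "set (s # ws) \<subseteq> S" using ws gen_step(1) by simp
  moreover have "foldr (\<circ>) (s # ws) id = s \<circ> w" using foldr_cons_comp ws(2) by metis
  ultimately show ?case by blast
qed

lemma clen_le: "set ws \<subseteq> S \<Longrightarrow> foldr (\<circ>) ws id = w \<Longrightarrow> clen S w \<le> length ws"
  unfolding clen_def by (rule Least_le) auto

lemma clen_word: "w \<in> gen S \<Longrightarrow> \<exists>ws. set ws \<subseteq> S \<and> foldr (\<circ>) ws id = w \<and> length ws = clen S w"
proof -
  assume "w \<in> gen S"
  then obtain ws where ws: "set ws \<subseteq> S" "foldr (\<circ>) ws id = w" using gen_word by blast
  have "\<exists>ws'. length ws' = clen S w \<and> set ws' \<subseteq> S \<and> foldr (\<circ>) ws' id = w"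
    unfolding clen_def by (rule LeastI[of _ "length ws"]) (use ws in blast)
  then show ?thesis by auto
qed

lemma gen_conj:
  assumes vv: "v \<circ> v' = id" "v' \<circ> v = id"
    and S: "\<And>t. t \<in> S1 \<Longrightarrow> v' \<circ> t \<circ> v \<in> gen S2"
  shows "g \<in> gen S1 \<Longrightarrow> v' \<circ> g \<circ> v \<in> gen S2"
proof (induction g rule: gen.induct)
  case gen_id then show ?case using vv(2) gen.gen_id by (metis comp_id)
next
  case (gen_step s w)
  have "v' \<circ> (s \<circ> w) \<circ> v = (v' \<circ> s \<circ> v) \<circ> (v' \<circ> w \<circ> v)"
    using vv(1) by (metis comp_assoc comp_id)
  then show ?case using gen_comp[OF S[OF gen_step(1)] gen_step(3)] by metis
qed

section \<open>The Weyl group acting on roots\<close>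

context rd begin

abbreviation RR where "RR \<equiv> {rrefl cor a | a. a \<in> Phi}"

lemma rrefl_apply: "rrefl cor a x = (\<lambda>i. x i - pair a x * cor a i)"
  by (simp add: rrefl_def refl_coch_def)

lemma rrefl_invol: "a \<in> Phi \<Longrightarrow> rrefl cor a \<circ> rrefl cor a = id"
  by (simp add: fun_eq_iff rrefl_def refl_coch_invol two)

lemma cor_neg: "a \<in> Phi \<Longrightarrow> cor (\<lambda>i. - a i) = (\<lambda>i. - cor a i)"
  using compat[of a a] refl_ch_self[OF two] refl_coch_self[OF two] by simp

lemma rrefl_neg: "a \<in> Phi \<Longrightarrow> rrefl cor (\<lambda>i. - a i) = rrefl cor a"
  by (simp add: fun_eq_iff rrefl_apply cor_neg)

lemma RR_gen: "a \<in> Phi \<Longrightarrow> rrefl cor a \<in> gen RR" by (rule gen_S) auto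

lemma W_lin: "w \<in> gen RR \<Longrightarrow> w (\<lambda>i. x i + k * y i) = (\<lambda>i. w x i + k * w y i)"
proof (induction w arbitrary: x y k rule: gen.induct)
  case gen_id then show ?case by simp
next
  case (gen_step s w)
  then obtain a where s: "s = rrefl cor a" by auto
  show ?case unfolding s comp_def gen_step(3)
    by (simp add: rrefl_apply fun_eq_iff algebra_simps)
qed

lemma W_lin_diff: "w \<in> gen RR \<Longrightarrow> w (\<lambda>i. x i - k * y i) = (\<lambda>i. w x i - k * w y i)"
  using W_lin[of w x "- k" y] by simp

lemma W_comp: "v \<in> gen RR \<Longrightarrow> w \<in> gen RR \<Longrightarrow> v \<circ> w \<in> gen RR" by (rule gen_comp)

lemma W_inv: "w \<in> gen RR \<Longrightarrow> \<exists>w'\<in>gen RR. w' \<circ> w = id \<and> w \<circ> w' = id"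
  by (rule gen_inv) (auto simp: rrefl_invol)

lemma W_pi_ex: "w \<in> gen RR \<Longrightarrow> a \<in> Phi \<Longrightarrow> \<exists>b\<in>Phi. cor b = w (cor a) \<and> (\<forall>x. pair b (w x) = pair a x)"
proof (induction w arbitrary: a rule: gen.induct)
  case gen_id then show ?case by auto
next
  case (gen_step s w)
  then obtain c where s: "s = rrefl cor c" and c: "c \<in> Phi" by auto
  obtain b where b: "b \<in> Phi" "cor b = w (cor a)" "\<forall>x. pair b (w x) = pair a x"
    using gen_step by blast
  have "refl_ch c (cor c) b \<in> Phi" using clos[OF c b(1)] .
  moreover have "cor (refl_ch c (cor c) b) = (s \<circ> w) (cor a)"
    using compat[OF b(1) c] b(2) s by (simp add: rrefl_def)
  moreover have "\<forall>x. pair (refl_ch c (cor c) b) ((s \<circ> w) x) = pair a x"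
    using b(3) s by (simp add: refl_ch_pair rrefl_def refl_coch_invol two[OF c])
  ultimately show ?case by blast
qed

definition pi :: "'n wel \<Rightarrow> 'n lat \<Rightarrow> 'n lat" where
  "pi w a = (THE b. b \<in> Phi \<and> cor b = w (cor a))"

lemma pi_unique: "b \<in> Phi \<Longrightarrow> cor b = w (cor a) \<Longrightarrow> pi w a = b"
  unfolding pi_def by (rule the_equality) (use injc in \<open>auto simp: inj_on_def\<close>)

lemma pi_props:
  assumes "w \<in> gen RR" "a \<in> Phi"
  shows "pi w a \<in> Phi" "cor (pi w a) = w (cor a)" "\<And>x. pair (pi w a) (w x) = pair a x"
proof -
  obtain b where b: "b \<in> Phi" "cor b = w (cor a)" "\<forall>x. pair b (w x) = pair a x"
    using W_pi_ex[OF assms] by blast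
  have "pi w a = b" by (rule pi_unique[of b w a, OF b(1,2)])
  then show "pi w a \<in> Phi" "cor (pi w a) = w (cor a)" "\<And>x. pair (pi w a) (w x) = pair a x"
    using b by auto
qed

lemma pi_s: "a \<in> Phi \<Longrightarrow> b \<in> Phi \<Longrightarrow> pi (rrefl cor b) a = refl_ch b (cor b) a"
  by (rule pi_unique) (auto simp: clos compat rrefl_def)

lemma pi_comp: "v \<in> gen RR \<Longrightarrow> w \<in> gen RR \<Longrightarrow> a \<in> Phi \<Longrightarrow> pi (v \<circ> w) a = pi v (pi w a)"
  by (rule pi_unique) (auto simp: pi_props)

lemma pi_id: "a \<in> Phi \<Longrightarrow> pi id a = a"
  by (rule pi_unique) auto

lemma W_ext: "w \<in> gen RR \<Longrightarrow> (\<And>x. pair l (w x) = pair m (w x)) \<Longrightarrow> l = m"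
proof -
  assume w: "w \<in> gen RR" and h: "\<And>x. pair l (w x) = pair m (w x)"
  obtain w' where "w \<circ> w' = id" using W_inv[OF w] by blast
  then have "w (w' y) = y" for y by (metis comp_apply id_apply)
  then show "l = m" using h by (metis pair_ext)
qed

lemma pi_neg: "w \<in> gen RR \<Longrightarrow> a \<in> Phi \<Longrightarrow> pi w (\<lambda>i. - a i) = (\<lambda>i. - pi w a i)"
  by (rule W_ext[of w]) (auto simp: pi_props neg_in)

lemma pi_add: "w \<in> gen RR \<Longrightarrow> a \<in> Phi \<Longrightarrow> b \<in> Phi \<Longrightarrow> c \<in> Phi \<Longrightarrow> a = (\<lambda>i. b i + c i) \<Longrightarrow>
    pi w a = (\<lambda>i. pi w b i + pi w c i)"
  by (rule W_ext[of w]) (auto simp: pi_props)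

lemma conj: "w \<in> gen RR \<Longrightarrow> a \<in> Phi \<Longrightarrow> w \<circ> rrefl cor a = rrefl cor (pi w a) \<circ> w"
  by (auto simp: fun_eq_iff rrefl_apply W_lin_diff pi_props)

lemma W_inj: "w \<in> gen RR \<Longrightarrow> w \<circ> u = w \<circ> v \<Longrightarrow> u = v"
proof -
  assume w: "w \<in> gen RR" and e: "w \<circ> u = w \<circ> v"
  obtain w' where "w' \<circ> w = id" using W_inv[OF w] by blast
  then show "u = v" using e by (metis comp_assoc id_comp)
qed

lemma W_inj_r: "w \<in> gen RR \<Longrightarrow> u \<circ> w = v \<circ> w \<Longrightarrow> u = v"
proof -
  assume w: "w \<in> gen RR" and e: "u \<circ> w = v \<circ> w"
  obtain w' where "w \<circ> w' = id" using W_inv[OF w] by blast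
  then show "u = v" using e by (metis comp_assoc comp_id)
qed

end



lemma foldr_snoc_comp: "foldr (\<circ>) (ws @ [t]) id = foldr (\<circ>) ws id \<circ> t"
  by (induction ws) (auto simp: fun_eq_iff)

definition brel where "brel S G = (\<lambda>a b. \<exists>t\<in>crefls S G. b = a \<circ> t \<and> clen S a < clen S b)"

lemma bruhat_brel: "bruhat S G u w \<longleftrightarrow> u \<in> G \<and> w \<in> G \<and> (brel S G)\<^sup>*\<^sup>* u w"
  unfolding bruhat_def brel_def by simp

lemma brel_iff: "brel S G a b \<longleftrightarrow> (\<exists>t\<in>crefls S G. b = a \<circ> t \<and> clen S a < clen S b)"
  unfolding brel_def by simp

lemma bruhat_clen: "bruhat S G u w \<Longrightarrow> u = w \<or> clen S u < clen S w"
proof -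
  assume "bruhat S G u w"
  then have "(\<lambda>a b. \<exists>t\<in>crefls S G. b = a \<circ> t \<and> clen S a < clen S b)\<^sup>*\<^sup>* u w"
    by (simp add: bruhat_def)
  then show ?thesis
    by (induction rule: rtranclp_induct) auto
qed

lemma bruhat_antisym: "bruhat S G u w \<Longrightarrow> bruhat S G w u \<Longrightarrow> u = w"
  by (metis bruhat_clen less_asym)

context rd begin

lemma B_r_add1[simp]: "B x (\<lambda>i. l i + m i) = B x l + B x m"
  by (simp add: B_def algebra_simps sum.distrib)

definition ht :: "'n lat \<Rightarrow> nat" where "ht a = card {b\<in>Phi. F b < F a}"

lemma ht_less: "b \<in> Phi \<Longrightarrow> F b < F a \<Longrightarrow> ht b < ht a"
  unfolding ht_def by (rule psubset_card_mono) (use fin in auto)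

end

context sub begin

abbreviation SS where "SS \<equiv> {rrefl cor a | a. a \<in> Dl}"
abbreviation WW where "WW \<equiv> gen {rrefl cor a | a. a \<in> Psi}"

lemma Dl_in: "a \<in> Dl \<Longrightarrow> a \<in> Psi \<and> a \<in> P \<and> a \<in> Phi" using Dl_iff PsiPhi by auto

lemma SS_RR: "SS \<subseteq> RR" using Dl_in by blast
lemma WW_RR: "WW \<subseteq> gen RR" by (rule gen_mono) (use PsiPhi in blast)
lemma genSS_WW: "gen SS \<subseteq> WW" by (rule gen_mono) (use Dl_in in blast)
lemma genSS_RR: "gen SS \<subseteq> gen RR" using genSS_WW WW_RR by blast

lemma pi_Psi: "w \<in> WW \<Longrightarrow> a \<in> Psi \<Longrightarrow> pi w a \<in> Psi"
proof (induction w arbitrary: a rule: gen.induct)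
  case gen_id then show ?case using pi_id[OF PsiPhi] by metis
next
  case (gen_step s w)
  then obtain c where s: "s = rrefl cor c" and c: "c \<in> Psi" by auto
  have w: "w \<in> gen RR" using gen_step(2) WW_RR by blast
  have "pi (s \<circ> w) a = pi s (pi w a)"
    using pi_comp[OF _ w] s c PsiPhi gen_step(4) RR_gen by simp
  also have "\<dots> = refl_ch c (cor c) (pi w a)"
    using s pi_s c PsiPhi gen_step pi_props(1)[OF w] by simp
  finally have e: "pi (s \<circ> w) a = refl_ch c (cor c) (pi w a)" .
  show ?case unfolding e by (rule Pclos[OF c gen_step(3)[OF gen_step(4)]])
qed

lemma exists_simple_B:
  "a \<in> Psi \<inter> P \<Longrightarrow> B l a > 0 \<Longrightarrow> \<exists>al\<in>Dl. B l al > 0"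
proof (induction "ht a" arbitrary: a rule: less_induct)
  case less
  show ?case
  proof (cases "a \<in> Dl")
    case True then show ?thesis using less by blast
  next
    case False
    then obtain b c where bc: "b \<in> Psi \<inter> P" "c \<in> Psi \<inter> P" "a = (\<lambda>i. b i + c i)"
      using less.prems Dl_iff by blast
    have Fb: "F b > 0" "F c > 0" using bc P_iff by auto
    have "F b < F a" "F c < F a" using bc Fb by simp_all
    then have ht: "ht b < ht a" "ht c < ht a" using ht_less bc P_iff by auto
    have "B l b + B l c > 0" using less.prems bc by simp
    then have "B l b > 0 \<or> B l c > 0" by linarith
    then show ?thesis using less.hyps ht bc by blast
  qed
qed

lemma exists_simple_pos: "a \<in> Psi \<inter> P \<Longrightarrow> \<exists>al\<in>Dl. pair a (cor al) > 0"
proof -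
  assume a: "a \<in> Psi \<inter> P"
  then have "a \<in> Phi" using PsiPhi by simp
  then have "B a a > 0" using B_pos[of a] by simp
  then obtain al where al: "al \<in> Dl" "B a al > 0" using exists_simple_B a by blast
  have "2 * B a al = pair a (cor al) * B al al" using B_form Dl_in al by blast
  moreover have "al \<in> Phi" using Dl_in al by simp
  then have "B al al > 0" using B_pos[of al] by simp
  ultimately have "pair a (cor al) * B al al > 0" using al(2) by simp
  then have "pair a (cor al) > 0" using \<open>B al al > 0\<close> by (simp add: zero_less_mult_iff)
  then show ?thesis using al by blast
qed

lemma rrefl_conj_eq:
  assumes al: "al \<in> Phi" and a: "a \<in> Phi"
  shows "rrefl cor (refl_ch al (cor al) a) = rrefl cor al \<circ> rrefl cor a \<circ> rrefl cor al"
proof -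
  have "rrefl cor al \<circ> rrefl cor a = rrefl cor (pi (rrefl cor al) a) \<circ> rrefl cor al"
    using conj[OF RR_gen[OF al] a] .
  also have "pi (rrefl cor al) a = refl_ch al (cor al) a" using pi_s[OF a al] .
  finally have "rrefl cor al \<circ> rrefl cor a \<circ> rrefl cor al = rrefl cor (refl_ch al (cor al) a) \<circ> (rrefl cor al \<circ> rrefl cor al)"
    by (metis comp_assoc)
  then show ?thesis using rrefl_invol[OF al] by (metis comp_id)
qed

lemma posroot_conj:
  "a \<in> Psi \<inter> P \<Longrightarrow> \<exists>g g' al. g \<in> gen SS \<and> g' \<in> gen SS \<and> g' \<circ> g = id \<and> al \<in> Dl \<and>
      rrefl cor a = g \<circ> rrefl cor al \<circ> g'"
proof (induction "ht a" arbitrary: a rule: less_induct)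
  case less
  show ?case
  proof (cases "a \<in> Dl")
    case True
    then show ?thesis using gen.gen_id[of SS] by (intro exI[of _ id] exI[of _ a]) auto
  next
    case False
    obtain al where al: "al \<in> Dl" "pair a (cor al) > 0" using exists_simple_pos less.prems by blast
    have alP: "al \<in> Psi" "al \<in> P" "al \<in> Phi" using Dl_in al by auto
    have aP: "a \<in> Psi" "a \<in> P" "a \<in> Phi" using less.prems PsiPhi by auto
    define a' where "a' = refl_ch al (cor al) a"
    have ne: "a \<noteq> al" using False al by blast
    have a'P: "a' \<in> Psi" "a' \<in> P" "a' \<in> Phi"
      using Pclos[OF alP(1) aP(1)] L2[OF al(1) less.prems ne] PsiPhi a'_def by auto
    have "F a' = F a - of_int (pair a (cor al)) * F al" unfolding a'_def refl_ch_def by simp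
    moreover have "of_int (pair a (cor al)) * F al > 0" using al(2) alP(2) P_iff by simp
    ultimately have "F a' < F a" by simp
    then have "ht a' < ht a" using ht_less a'P by simp
    then obtain g g' al' where IH: "g \<in> gen SS" "g' \<in> gen SS" "g' \<circ> g = id" "al' \<in> Dl"
       "rrefl cor a' = g \<circ> rrefl cor al' \<circ> g'" using less.hyps a'P by blast
    have sa: "rrefl cor al \<in> gen SS" by (rule gen_S) (use al(1) in blast)
    have "refl_ch al (cor al) a' = a" unfolding a'_def using refl_ch_invol[OF two[OF alP(3)]] by simp
    then have "rrefl cor a = rrefl cor al \<circ> rrefl cor a' \<circ> rrefl cor al"
      using rrefl_conj_eq[OF alP(3) a'P(3)] by metis
    also have "\<dots> = (rrefl cor al \<circ> g) \<circ> rrefl cor al' \<circ> (g' \<circ> rrefl cor al)"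
      using IH(5) by (metis comp_assoc)
    finally have eq: "rrefl cor a = (rrefl cor al \<circ> g) \<circ> rrefl cor al' \<circ> (g' \<circ> rrefl cor al)" .
    have "(g' \<circ> rrefl cor al) \<circ> (rrefl cor al \<circ> g) = id"
      using IH(3) rrefl_invol[OF alP(3)] by (metis comp_assoc comp_id)
    then show ?thesis using eq gen_comp[OF sa IH(1)] gen_comp[OF IH(2) sa] IH(4) by blast
  qed
qed

lemma Psi_cases: "a \<in> Psi \<Longrightarrow> \<exists>b\<in>Psi \<inter> P. rrefl cor a = rrefl cor b"
proof -
  assume a: "a \<in> Psi"
  show ?thesis
  proof (cases "a \<in> P")
    case True then show ?thesis using a by blast
  next
    case False
    then have "(\<lambda>i. - a i) \<in> Psi \<inter> P" using negP PsiPhi a Psi_neg by auto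
    then show ?thesis using rrefl_neg PsiPhi a by metis
  qed
qed

lemma s_genSS: "a \<in> Psi \<Longrightarrow> rrefl cor a \<in> gen SS"
proof -
  assume "a \<in> Psi"
  then obtain b where b: "b \<in> Psi \<inter> P" "rrefl cor a = rrefl cor b" using Psi_cases by blast
  obtain g g' al where "g \<in> gen SS" "g' \<in> gen SS" "al \<in> Dl" "rrefl cor b = g \<circ> rrefl cor al \<circ> g'"
    using posroot_conj[OF b(1)] by blast
  then show ?thesis using b(2) gen_comp gen_S by (metis (mono_tags, lifting) mem_Collect_eq)
qed

lemma WW_eq: "WW = gen SS"
proof
  show "gen SS \<subseteq> WW" by (rule genSS_WW)
  show "WW \<subseteq> gen SS"
  proof
    fix u assume "u \<in> WW" then show "u \<in> gen SS"
    proof (induction u rule: gen.induct)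
      case gen_id then show ?case by (rule gen.gen_id)
    next
      case (gen_step s w) then show ?case using s_genSS gen_comp by blast
    qed
  qed
qed

lemma s_crefls: "a \<in> Psi \<Longrightarrow> rrefl cor a \<in> crefls SS WW"
proof -
  assume "a \<in> Psi"
  then obtain b where b: "b \<in> Psi \<inter> P" "rrefl cor a = rrefl cor b" using Psi_cases by blast
  obtain g g' al where gg: "g \<in> gen SS" "g' \<in> gen SS" "g' \<circ> g = id" "al \<in> Dl"
      "rrefl cor b = g \<circ> rrefl cor al \<circ> g'"
    using posroot_conj[OF b(1)] by blast
  have gW: "g \<in> WW" "g' \<in> WW" using gg(1,2) genSS_WW by auto
  have sal: "rrefl cor al \<in> SS" using gg(4) by blast
  have e: "rrefl cor a = g \<circ> rrefl cor al \<circ> g'" using b(2) gg(5) by simp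
  show ?thesis unfolding crefls_def using e gW gg(3) sal by blast
qed

lemma crefls_sub: "t \<in> crefls SS WW \<Longrightarrow> \<exists>b\<in>Psi \<inter> P. t = rrefl cor b"
proof -
  assume "t \<in> crefls SS WW"
  then obtain g s g' where t: "t = g \<circ> s \<circ> g'" "g \<in> WW" "g' \<in> WW" "g' \<circ> g = id" "s \<in> SS"
    unfolding crefls_def by blast
  obtain al where al: "al \<in> Dl" "s = rrefl cor al" using t(5) by blast
  have g: "g \<in> gen RR" using t(2) WW_RR by blast
  obtain h where h: "h \<circ> g = id" "g \<circ> h = id" using W_inv[OF g] by blast
  have "g' = h" using t(4) h(2) by (metis comp_assoc comp_id id_comp)
  then have gg: "g \<circ> g' = id" using h by simp
  have "g \<circ> s = rrefl cor (pi g al) \<circ> g" using conj[OF g] al Dl_in by blast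
  then have "t = rrefl cor (pi g al)" using t(1) gg by (metis comp_assoc comp_id)
  moreover have "pi g al \<in> Psi" using pi_Psi[OF t(2)] al Dl_in by blast
  ultimately show ?thesis using Psi_cases by metis
qed

lemma exch:
  "set ws \<subseteq> SS \<Longrightarrow> b \<in> Psi \<inter> P \<Longrightarrow> pi (foldr (\<circ>) ws id) b \<notin> P \<Longrightarrow>
   \<exists>ws'. set ws' \<subseteq> SS \<and> length ws' < length ws \<and> foldr (\<circ>) ws' id = foldr (\<circ>) ws id \<circ> rrefl cor b"
proof (induction ws)
  case Nil
  then have "pi id b \<notin> P" by (metis foldr.simps(1) id_apply)
  moreover have "pi id b = b" using pi_id PsiPhi Nil.prems(2) by blast
  ultimately show ?case using Nil.prems(2) by (metis IntD2)
next
  case (Cons t rest)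
  obtain al where al: "al \<in> Dl" "t = rrefl cor al" using Cons.prems(1) by auto
  have alP: "al \<in> Psi" "al \<in> P" "al \<in> Phi" using Dl_in al by auto
  define wr where "wr = foldr (\<circ>) rest id"
  have srest: "set rest \<subseteq> SS" using Cons.prems(1) by simp
  then have wrS: "wr \<in> gen SS" unfolding wr_def by (rule gen_foldr)
  have wr: "wr \<in> gen RR" using wrS genSS_RR by blast
  have tR: "t \<in> gen RR" using al RR_gen alP by simp
  have bP: "b \<in> Phi" "b \<in> Psi" using Cons.prems(2) PsiPhi by auto
  have fw: "foldr (\<circ>) (t # rest) id = t \<circ> wr" using foldr_cons_comp wr_def by metis
  show ?case
  proof (cases "pi wr b \<in> P")
    case False
    then have "pi (foldr (\<circ>) rest id) b \<notin> P" unfolding wr_def .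
    from Cons.IH[OF srest Cons.prems(2) this]
    obtain ws' where ws': "set ws' \<subseteq> SS" "length ws' < length rest"
        "foldr (\<circ>) ws' id = wr \<circ> rrefl cor b"
      unfolding wr_def by blast
    have "set (t # ws') \<subseteq> SS" using ws' Cons.prems(1) by simp
    moreover have "length (t # ws') < length (t # rest)" using ws' by simp
    moreover have "foldr (\<circ>) (t # ws') id = foldr (\<circ>) (t # rest) id \<circ> rrefl cor b"
      using fw ws'(3) foldr_cons_comp by (metis comp_assoc)
    ultimately show ?thesis by blast
  next
    case True
    have gPsi: "pi wr b \<in> Psi" using pi_Psi wrS genSS_WW bP by blast
    have "pi (t \<circ> wr) b = pi t (pi wr b)" using pi_comp[OF tR wr bP(1)] .
    also have "\<dots> = refl_ch al (cor al) (pi wr b)" using pi_s[OF PsiPhi[OF gPsi] alP(3)] al(2) by simp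
    finally have e1: "pi (t \<circ> wr) b = refl_ch al (cor al) (pi wr b)" .
    have "pi (t \<circ> wr) b \<notin> P" using Cons.prems(3) fw by metis
    then have "refl_ch al (cor al) (pi wr b) \<notin> P" unfolding e1 .
    then have eq: "pi wr b = al" using L2[OF al(1)] gPsi True by blast
    have "t \<circ> wr \<circ> rrefl cor b = t \<circ> rrefl cor (pi wr b) \<circ> wr"
      using conj[OF wr bP(1)] by (simp add: comp_assoc)
    also have "\<dots> = wr" using eq al rrefl_invol[OF alP(3)] by (simp add: comp_assoc)
    finally have "foldr (\<circ>) rest id = foldr (\<circ>) (t # rest) id \<circ> rrefl cor b"
      using fw wr_def by simp
    moreover have "length rest < length (t # rest)" by simp
    ultimately show ?thesis using srest by blast
  qed
qed

lemma len_dec: "w \<in> gen SS \<Longrightarrow> b \<in> Psi \<inter> P \<Longrightarrow> pi w b \<notin> P \<Longrightarrow> clen SS (w \<circ> rrefl cor b) < clen SS w"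
proof -
  assume w: "w \<in> gen SS" and b: "b \<in> Psi \<inter> P" and n: "pi w b \<notin> P"
  obtain ws where ws: "set ws \<subseteq> SS" "foldr (\<circ>) ws id = w" "length ws = clen SS w"
    using clen_word[OF w] by blast
  obtain ws' where ws': "set ws' \<subseteq> SS" "length ws' < length ws" "foldr (\<circ>) ws' id = w \<circ> rrefl cor b"
    using exch[OF ws(1) b] n ws(2) by auto
  have "clen SS (w \<circ> rrefl cor b) \<le> length ws'" using clen_le[OF ws'(1,3)] .
  then show ?thesis using ws'(2) ws(3) by simp
qed

lemma len_inc: "w \<in> gen SS \<Longrightarrow> b \<in> Psi \<inter> P \<Longrightarrow> pi w b \<in> P \<Longrightarrow> clen SS w < clen SS (w \<circ> rrefl cor b)"
proof -
  assume w: "w \<in> gen SS" and b: "b \<in> Psi \<inter> P" and p: "pi w b \<in> P"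
  have bP: "b \<in> Phi" "b \<in> Psi" using b PsiPhi by auto
  have sb: "rrefl cor b \<in> gen SS" using s_genSS bP by simp
  define w1 where "w1 = w \<circ> rrefl cor b"
  have w1: "w1 \<in> gen SS" using gen_comp[OF w sb] w1_def by simp
  have wR: "w \<in> gen RR" using w genSS_RR by blast
  have "pi w1 b = pi w (pi (rrefl cor b) b)" using pi_comp[OF wR RR_gen[OF bP(1)] bP(1)] w1_def by simp
  also have "\<dots> = pi w (\<lambda>i. - b i)" using pi_s[OF bP(1) bP(1)] refl_ch_self[OF two[OF bP(1)]] by simp
  also have "\<dots> = (\<lambda>i. - pi w b i)" using pi_neg[OF wR bP(1)] .
  finally have "pi w1 b \<notin> P" using negP p P_sub by auto
  then have "clen SS (w1 \<circ> rrefl cor b) < clen SS w1" using len_dec[OF w1 b] by simp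
  moreover have "w1 \<circ> rrefl cor b = w" using w1_def rrefl_invol[OF bP(1)] by (simp add: comp_assoc)
  ultimately show ?thesis using w1_def by simp
qed

lemma bruhat_id: "x \<in> WW \<Longrightarrow> bruhat SS WW id x"
proof (induction "clen SS x" arbitrary: x rule: less_induct)
  case less
  have xS: "x \<in> gen SS" using less.prems WW_eq by simp
  obtain ws where ws: "set ws \<subseteq> SS" "foldr (\<circ>) ws id = x" "length ws = clen SS x"
    using clen_word[OF xS] by blast
  show ?case
  proof (cases "ws = []")
    case True
    then have "x = id" using ws by simp
    then show ?thesis using less.prems gen.gen_id[of "{rrefl cor a |a. a \<in> Psi}"] 
      unfolding bruhat_def by (metis rtranclp.rtrancl_refl)
  next
    case False
    then obtain ws1 t where wt: "ws = ws1 @ [t]" by (metis rev_exhaust)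
    define x1 where "x1 = foldr (\<circ>) ws1 id"
    have x: "x = x1 \<circ> t" using ws(2) wt foldr_snoc_comp x1_def by metis
    have ws1: "set ws1 \<subseteq> SS" "t \<in> SS" using ws(1) wt by auto
    have x1S: "x1 \<in> gen SS" using gen_foldr[OF ws1(1)] x1_def by simp
    have "clen SS x1 \<le> length ws1" using clen_le[OF ws1(1)] x1_def by simp
    then have lt: "clen SS x1 < clen SS x" using ws(3) wt by simp
    then have IH: "bruhat SS WW id x1" using less.hyps x1S WW_eq by simp
    have e: "t = id \<circ> t \<circ> id" by simp
    have "id \<in> WW" by (rule gen.gen_id)
    moreover have ii: "id \<circ> id = id" by simp
    ultimately have tc: "t \<in> crefls SS WW" unfolding crefls_def using e ws1(2) by blast
    have r1: "(brel SS WW)\<^sup>*\<^sup>* id x1"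
      using IH unfolding bruhat_brel by blast
    have r2: "brel SS WW x1 x"
      unfolding brel_iff using tc x lt by blast
    have "(brel SS WW)\<^sup>*\<^sup>* id x"
      using rtranclp.rtrancl_into_rtrancl[of "brel SS WW" id x1 x, OF r1 r2] .
    then show ?thesis unfolding bruhat_brel using less.prems gen.gen_id[of "{rrefl cor a |a. a \<in> Psi}"]
      by blast
  qed
qed

end



section \<open>Character sheaves\<close>

lemma tame_mult: "tame_char p L \<Longrightarrow> L (\<lambda>i. x i + y i) = L x * L y"
  by (simp add: tame_char_def)

lemma L_shift_nat: "tame_char p L \<Longrightarrow> L c = 1 \<Longrightarrow> L (\<lambda>i. x i + int n * c i) = L x"
proof (induction n)
  case 0 then show ?case by simp
next
  case (Suc n)
  have "(\<lambda>i. x i + int (Suc n) * c i) = (\<lambda>i. (x i + int n * c i) + c i)"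
    by (simp add: fun_eq_iff algebra_simps)
  then have "L (\<lambda>i. x i + int (Suc n) * c i) = L (\<lambda>i. (x i + int n * c i) + c i)"
    by (simp only:)
  also have "\<dots> = L (\<lambda>i. x i + int n * c i) * L c" by (rule tame_mult[OF Suc.prems(1)])
  finally show ?case using Suc by simp
qed

lemma L_shift: assumes t: "tame_char p L" and c: "L c = 1" shows "L (\<lambda>i. x i - k * c i) = L x"
proof (cases "k \<le> 0")
  case True
  have e: "(\<lambda>i. x i - k * c i) = (\<lambda>i. x i + int (nat (- k)) * c i)" using True by simp
  show ?thesis unfolding e using L_shift_nat[OF t, OF c, where x=x and n="nat (- k)"] .
next
  case False
  have e: "(\<lambda>i. (x i - k * c i) + int (nat k) * c i) = x" using False by simp
  have "L (\<lambda>i. (x i - k * c i) + int (nat k) * c i) = L (\<lambda>i. x i - k * c i)"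
    using L_shift_nat[OF t, OF c, where x="\<lambda>i. x i - k * c i" and n="nat k"] by simp
  then show ?thesis unfolding e by simp
qed

context rd begin

lemma sub_Phi: "sub Phi cor P f Phi"
  by (unfold_locales) (auto simp: clos)

lemma sub_L: assumes t: "tame_char p L" shows "sub Phi cor P f (PhiL Phi cor L)"
proof (unfold_locales)
  show "PhiL Phi cor L \<subseteq> Phi" by (auto simp: PhiL_def)
  fix a b assume a: "a \<in> PhiL Phi cor L" and b: "b \<in> PhiL Phi cor L"
  have aP: "a \<in> Phi" "L (cor a) = 1" and bP: "b \<in> Phi" "L (cor b) = 1"
    using a b by (auto simp: PhiL_def)
  have "L (cor (refl_ch a (cor a) b)) = L (refl_coch a (cor a) (cor b))" by (simp only: compat[OF bP(1) aP(1)])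
  also have "\<dots> = L (cor b)" unfolding refl_coch_def using L_shift[OF t, OF aP(2), where x="cor b" and k="pair a (cor b)"] .
  finally show "refl_ch a (cor a) b \<in> PhiL Phi cor L" using clos[OF aP(1) bP(1)] bP(2) by (simp add: PhiL_def)
qed

lemma Wo_fix: assumes t: "tame_char p L" shows "x \<in> Wo Phi cor L \<Longrightarrow> L (x y) = L y"
  unfolding Wo_def
proof (induction x arbitrary: y rule: gen.induct)
  case gen_id then show ?case by simp
next
  case (gen_step s w)
  then obtain a where s: "s = rrefl cor a" and a: "a \<in> PhiL Phi cor L" by auto
  have "L (cor a) = 1" using a by (simp add: PhiL_def)
  then have "L (s (w y)) = L (w y)" unfolding s rrefl_apply using L_shift[OF t, where x="w y" and k="pair a (w y)"] by blast
  then show ?case using gen_step(3) by simp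
qed

lemma W_inj_fun: "w \<in> gen RR \<Longrightarrow> inj w"
proof -
  assume "w \<in> gen RR"
  then obtain w' where "w' \<circ> w = id" using W_inv by blast
  then show "inj w" by (metis comp_apply id_apply injI)
qed

lemma act_fix: "w \<in> gen RR \<Longrightarrow> act w L = L' \<Longrightarrow> L' (w y) = L y"
proof -
  assume w: "w \<in> gen RR" and "act w L = L'"
  then have "L' (w y) = L (inv w (w y))" by (auto simp: act_def)
  then show ?thesis using inv_f_f[OF W_inj_fun[OF w]] by simp
qed

lemma pi_L: "w \<in> gen RR \<Longrightarrow> (\<And>y. L' (w y) = L y) \<Longrightarrow> a \<in> PhiL Phi cor L \<Longrightarrow> pi w a \<in> PhiL Phi cor L'"
  by (auto simp: PhiL_def pi_props)

lemma conj_Wo: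
  assumes v: "v \<in> gen RR" "v' \<in> gen RR" "v \<circ> v' = id" "v' \<circ> v = id"
    and LL: "\<And>y. L2 (v y) = L1 y"
  shows "y \<in> Wo Phi cor L2 \<Longrightarrow> v' \<circ> y \<circ> v \<in> Wo Phi cor L1"
  unfolding Wo_def
proof (rule gen_conj[OF v(3,4)])
  fix t assume "t \<in> {rrefl cor a |a. a \<in> PhiL Phi cor L2}"
  then obtain a where t: "t = rrefl cor a" and a: "a \<in> PhiL Phi cor L2" by auto
  have aP: "a \<in> Phi" using a by (simp add: PhiL_def)
  have LL': "L1 (v' y) = L2 y" for y using LL[of "v' y"] v(3) by (metis comp_apply id_apply)
  have "v' \<circ> t = rrefl cor (pi v' a) \<circ> v'" using conj[OF v(2) aP] t by simp
  then have "v' \<circ> t \<circ> v = rrefl cor (pi v' a)" using v(4) by (metis comp_assoc comp_id)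
  moreover have "pi v' a \<in> PhiL Phi cor L1" using pi_L[OF v(2) LL' a] .
  ultimately show "v' \<circ> t \<circ> v \<in> gen {rrefl cor a |a. a \<in> PhiL Phi cor L1}"
    using gen_S by (metis (mono_tags, lifting) mem_Collect_eq)
qed

end

section \<open>Transport of Bruhat order along conjugation\<close>

lemma foldr_map_conj:
  assumes "v \<circ> v' = id" "v' \<circ> v = id"
  shows "foldr (\<circ>) (map (\<lambda>t. v' \<circ> t \<circ> v) ws) id = v' \<circ> foldr (\<circ>) ws id \<circ> v"
proof (induction ws)
  case Nil then show ?case using assms(2) by (metis comp_id foldr.simps(1) id_apply list.simps(8))
next
  case (Cons t ws)
  have "foldr (\<circ>) (map (\<lambda>t. v' \<circ> t \<circ> v) (t # ws)) id = (v' \<circ> t \<circ> v) \<circ> foldr (\<circ>) (map (\<lambda>t. v' \<circ> t \<circ> v) ws) id"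
    by (simp only: list.map(2) foldr_cons_comp)
  also have "\<dots> = (v' \<circ> t \<circ> v) \<circ> (v' \<circ> foldr (\<circ>) ws id \<circ> v)" by (simp only: Cons.IH)
  also have "\<dots> = v' \<circ> (t \<circ> foldr (\<circ>) ws id) \<circ> v" using assms(1) by (metis comp_assoc comp_id)
  also have "\<dots> = v' \<circ> foldr (\<circ>) (t # ws) id \<circ> v" by (metis foldr_cons_comp)
  finally show ?case .
qed

lemma clen_conj_le:
  assumes vv: "v \<circ> v' = id" "v' \<circ> v = id" and img: "(\<lambda>t. v' \<circ> t \<circ> v) ` S1 \<subseteq> S2"
    and g: "g \<in> gen S1"
  shows "clen S2 (v' \<circ> g \<circ> v) \<le> clen S1 g"
proof -
  obtain ws where ws: "set ws \<subseteq> S1" "foldr (\<circ>) ws id = g" "length ws = clen S1 g"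
    using clen_word[OF g] by blast
  have "set (map (\<lambda>t. v' \<circ> t \<circ> v) ws) \<subseteq> S2" using ws(1) img by auto
  moreover have "foldr (\<circ>) (map (\<lambda>t. v' \<circ> t \<circ> v) ws) id = v' \<circ> g \<circ> v"
    using foldr_map_conj[OF vv] ws(2) by simp
  ultimately have "clen S2 (v' \<circ> g \<circ> v) \<le> length (map (\<lambda>t. v' \<circ> t \<circ> v) ws)" by (rule clen_le)
  then show ?thesis using ws(3) by simp
qed

lemma bruhat_transport:
  assumes vv: "v \<circ> v' = id" "v' \<circ> v = id" and img: "(\<lambda>t. v' \<circ> t \<circ> v) ` S1 = S2"
    and br: "bruhat S1 (gen S1) a b"
  shows "bruhat S2 (gen S2) (v' \<circ> a \<circ> v) (v' \<circ> b \<circ> v)"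
proof -
  have img2: "(\<lambda>t. v \<circ> t \<circ> v') ` S2 \<subseteq> S1"
  proof
    fix x assume "x \<in> (\<lambda>t. v \<circ> t \<circ> v') ` S2"
    then obtain t where t: "t \<in> S1" "x = v \<circ> (v' \<circ> t \<circ> v) \<circ> v'" using img by auto
    have "x = t" using t(2) vv by (metis comp_assoc comp_id id_comp)
    then show "x \<in> S1" using t by simp
  qed
  have SS2: "v' \<circ> t \<circ> v \<in> gen S2" if "t \<in> S1" for t
  proof (rule gen_S)
    show "v' \<circ> t \<circ> v \<in> S2" unfolding img[symmetric] using that by (rule imageI)
  qed
  have phiG: "g \<in> gen S1 \<Longrightarrow> v' \<circ> g \<circ> v \<in> gen S2" for g
    using gen_conj[OF vv SS2] by blast
  have cl: "g \<in> gen S1 \<Longrightarrow> clen S2 (v' \<circ> g \<circ> v) = clen S1 g" for g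
  proof -
    assume g: "g \<in> gen S1"
    have "clen S2 (v' \<circ> g \<circ> v) \<le> clen S1 g" by (rule clen_conj_le[OF vv _ g]) (use img in blast)
    moreover have "clen S1 (v \<circ> (v' \<circ> g \<circ> v) \<circ> v') \<le> clen S2 (v' \<circ> g \<circ> v)"
      by (rule clen_conj_le[OF vv(2,1) img2 phiG[OF g]])
    moreover have "v \<circ> (v' \<circ> g \<circ> v) \<circ> v' = g" using vv by (metis comp_assoc comp_id id_comp)
    ultimately show ?thesis by simp
  qed
  have cr: "t \<in> crefls S1 (gen S1) \<Longrightarrow> v' \<circ> t \<circ> v \<in> crefls S2 (gen S2) \<and> t \<in> gen S1" for t
  proof -
    assume "t \<in> crefls S1 (gen S1)"
    then obtain g s g' where t: "t = g \<circ> s \<circ> g'" "g \<in> gen S1" "g' \<in> gen S1" "g' \<circ> g = id" "s \<in> S1"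
      unfolding crefls_def by blast
    have e: "v' \<circ> t \<circ> v = (v' \<circ> g \<circ> v) \<circ> (v' \<circ> s \<circ> v) \<circ> (v' \<circ> g' \<circ> v)"
      using t(1) vv by (metis comp_assoc comp_id)
    have e2: "(v' \<circ> g' \<circ> v) \<circ> (v' \<circ> g \<circ> v) = id" using t(4) vv by (metis comp_assoc comp_id)
    have "v' \<circ> s \<circ> v \<in> S2" using img t(5) by blast
    then have "v' \<circ> t \<circ> v \<in> crefls S2 (gen S2)"
      unfolding crefls_def using e e2 phiG[OF t(2)] phiG[OF t(3)] by blast
    moreover have "t \<in> gen S1" using t gen_comp gen_S by metis
    ultimately show ?thesis by simp
  qed
  have main: "(brel S1 (gen S1))\<^sup>*\<^sup>* a b \<Longrightarrow> a \<in> gen S1 \<Longrightarrow>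
      (brel S2 (gen S2))\<^sup>*\<^sup>* (v' \<circ> a \<circ> v) (v' \<circ> b \<circ> v) \<and> b \<in> gen S1"
  proof (induction rule: rtranclp_induct)
    case base then show ?case by simp
  next
    case (step y z)
    then have IH: "(brel S2 (gen S2))\<^sup>*\<^sup>* (v' \<circ> a \<circ> v) (v' \<circ> y \<circ> v)" "y \<in> gen S1" by blast+
    obtain t where t: "t \<in> crefls S1 (gen S1)" "z = y \<circ> t" "clen S1 y < clen S1 z"
      using step(2) unfolding brel_iff by blast
    have tt: "v' \<circ> t \<circ> v \<in> crefls S2 (gen S2)" "t \<in> gen S1" using cr[OF t(1)] by auto
    have zS: "z \<in> gen S1" using gen_comp[OF IH(2) tt(2)] t(2) by simp
    have "v' \<circ> z \<circ> v = (v' \<circ> y \<circ> v) \<circ> (v' \<circ> t \<circ> v)" using t(2) vv by (metis comp_assoc comp_id)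
    moreover have "clen S2 (v' \<circ> y \<circ> v) < clen S2 (v' \<circ> z \<circ> v)" using cl[OF IH(2)] cl[OF zS] t(3) by simp
    ultimately have "brel S2 (gen S2) (v' \<circ> y \<circ> v) (v' \<circ> z \<circ> v)" unfolding brel_iff using tt(1) by blast
    then show ?case using IH zS by (meson rtranclp.rtrancl_into_rtrancl)
  qed
  have "a \<in> gen S1" "b \<in> gen S1" "(brel S1 (gen S1))\<^sup>*\<^sup>* a b" using br unfolding bruhat_brel by auto
  then show ?thesis unfolding bruhat_brel using main phiG by blast
qed

lemma bruhat_transport_iff:
  assumes vv: "v \<circ> v' = id" "v' \<circ> v = id" and img: "(\<lambda>t. v' \<circ> t \<circ> v) ` S1 = S2"
  shows "bruhat S1 (gen S1) a b \<longleftrightarrow> bruhat S2 (gen S2) (v' \<circ> a \<circ> v) (v' \<circ> b \<circ> v)"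
proof
  assume "bruhat S1 (gen S1) a b" then show "bruhat S2 (gen S2) (v' \<circ> a \<circ> v) (v' \<circ> b \<circ> v)"
    by (rule bruhat_transport[OF vv img])
next
  have img2: "(\<lambda>t. v \<circ> t \<circ> v') ` S2 = S1"
  proof
    show "(\<lambda>t. v \<circ> t \<circ> v') ` S2 \<subseteq> S1"
    proof
      fix x assume "x \<in> (\<lambda>t. v \<circ> t \<circ> v') ` S2"
      then obtain t where t: "t \<in> S1" "x = v \<circ> (v' \<circ> t \<circ> v) \<circ> v'" using img by auto
      have "x = t" using t(2) vv by (metis comp_assoc comp_id id_comp)
      then show "x \<in> S1" using t by simp
    qed
    show "S1 \<subseteq> (\<lambda>t. v \<circ> t \<circ> v') ` S2"
    proof
      fix t assume "t \<in> S1"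
      moreover have "t = v \<circ> (v' \<circ> t \<circ> v) \<circ> v'" using vv by (metis comp_assoc comp_id id_comp)
      ultimately show "t \<in> (\<lambda>t. v \<circ> t \<circ> v') ` S2" using img by blast
    qed
  qed
  assume "bruhat S2 (gen S2) (v' \<circ> a \<circ> v) (v' \<circ> b \<circ> v)"
  from bruhat_transport[OF vv(2,1) img2 this]
  show "bruhat S1 (gen S1) a b" using vv by (metis comp_assoc comp_id id_comp)
qed



sublocale rd \<subseteq> Ph: sub Phi cor P f Phi by (rule sub_Phi)

context rd begin

lemma Ph_SS: "Ph.SS = Wsimple cor P"
  unfolding Ph.Dl_def Wsimple_def using P_sub by (simp add: Int_absorb1)

lemma Ph_WW: "Ph.WW = Wgrp Phi cor" by (simp add: Wgrp_def)

lemma RR_SS: "gen RR = gen Ph.SS" using Ph.WW_eq by simp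

end

context sub begin

lemma WW_inv: "x \<in> WW \<Longrightarrow> \<exists>x'\<in>WW. x' \<circ> x = id \<and> x \<circ> x' = id"
  by (rule gen_inv) (auto simp: rrefl_invol PsiPhi)

lemma part3core:
  assumes u: "u \<in> gen RR" and pos: "\<And>a. a \<in> Psi \<inter> P \<Longrightarrow> pi u a \<in> P"
    and br: "bruhat SS WW x' x"
  shows "bruhat (Wsimple cor P) (Wgrp Phi cor) (u \<circ> x') (u \<circ> x)"
proof -
  have main: "(brel SS WW)\<^sup>*\<^sup>* y z \<Longrightarrow> y \<in> WW \<Longrightarrow>
     (brel (Wsimple cor P) (Wgrp Phi cor))\<^sup>*\<^sup>* (u \<circ> y) (u \<circ> z) \<and> z \<in> WW" for y z
  proof (induction rule: rtranclp_induct)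
    case base then show ?case by blast
  next
    case (step y1 z1)
    have IH: "(brel (Wsimple cor P) (Wgrp Phi cor))\<^sup>*\<^sup>* (u \<circ> y) (u \<circ> y1)" "y1 \<in> WW"
      using step.IH step.prems by blast+
    obtain t where t: "t \<in> crefls SS WW" "z1 = y1 \<circ> t" "clen SS y1 < clen SS z1"
      using step.hyps(2) unfolding brel_iff by blast
    obtain b where b: "b \<in> Psi \<inter> P" "t = rrefl cor b" using crefls_sub[OF t(1)] by blast
    have bP: "b \<in> Phi" "b \<in> P" "b \<in> Psi" using b PsiPhi by auto
    have y1S: "y1 \<in> gen SS" using IH(2) WW_eq by simp
    have y1R: "y1 \<in> gen RR" using IH(2) WW_RR by blast
    have "pi y1 b \<in> P"
    proof (rule ccontr)
      assume "pi y1 b \<notin> P"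
      then have "clen SS (y1 \<circ> rrefl cor b) < clen SS y1" using len_dec[OF y1S b(1)] by simp
      then show False using t b(2) by simp
    qed
    moreover have "pi y1 b \<in> Psi" using pi_Psi[OF IH(2) bP(3)] .
    ultimately have "pi u (pi y1 b) \<in> P" using pos by blast
    then have pp: "pi (u \<circ> y1) b \<in> P" using pi_comp[OF u y1R bP(1)] by simp
    have uy: "u \<circ> y1 \<in> gen Ph.SS" using gen_comp[OF u y1R] RR_SS by simp
    have "clen Ph.SS (u \<circ> y1) < clen Ph.SS (u \<circ> y1 \<circ> rrefl cor b)"
      using Ph.len_inc[OF uy _ pp] bP by simp
    then have cl: "clen (Wsimple cor P) (u \<circ> y1) < clen (Wsimple cor P) (u \<circ> z1)"
      using t(2) b(2) Ph_SS by (simp add: comp_assoc)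
    have "rrefl cor b \<in> crefls Ph.SS Ph.WW" using Ph.s_crefls bP by simp
    then have tc: "t \<in> crefls (Wsimple cor P) (Wgrp Phi cor)" using b(2) Ph_SS Ph_WW by simp
    have "u \<circ> z1 = (u \<circ> y1) \<circ> t" using t(2) by (simp add: comp_assoc)
    then have "brel (Wsimple cor P) (Wgrp Phi cor) (u \<circ> y1) (u \<circ> z1)"
      unfolding brel_iff using tc cl by blast
    moreover have "z1 \<in> WW" using t(2) b(2) gen_comp[OF IH(2) gen_S[of t]] bP(3) by blast
    ultimately show ?case using IH(1) by (meson rtranclp.rtrancl_into_rtrancl)
  qed
  have "x' \<in> WW" "x \<in> WW" "(brel SS WW)\<^sup>*\<^sup>* x' x" using br unfolding bruhat_brel by auto
  then have r: "(brel (Wsimple cor P) (Wgrp Phi cor))\<^sup>*\<^sup>* (u \<circ> x') (u \<circ> x)" using main by blast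
  have "u \<circ> x' \<in> Wgrp Phi cor" "u \<circ> x \<in> Wgrp Phi cor"
    using gen_comp[OF u] WW_RR \<open>x' \<in> WW\<close> \<open>x \<in> WW\<close> unfolding Wgrp_def by blast+
  then show ?thesis unfolding bruhat_brel using r by blast
qed

lemma wmin_char:
  assumes u: "u \<in> gen RR" and pos: "\<And>a. a \<in> Psi \<inter> P \<Longrightarrow> pi u a \<in> P"
  shows "wmin Phi cor P ((\<lambda>x. u \<circ> x) ` WW) = u"
proof -
  have low: "\<forall>w\<in>(\<lambda>x. u \<circ> x) ` WW. bruhat (Wsimple cor P) (Wgrp Phi cor) u w"
  proof
    fix w assume "w \<in> (\<lambda>x. u \<circ> x) ` WW"
    then obtain x where x: "x \<in> WW" "w = u \<circ> x" by blast
    have "bruhat (Wsimple cor P) (Wgrp Phi cor) (u \<circ> id) (u \<circ> x)"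
      using part3core[OF u pos bruhat_id[OF x(1)]] .
    then show "bruhat (Wsimple cor P) (Wgrp Phi cor) u w" using x(2) by simp
  qed
  have uin: "u \<in> (\<lambda>x. u \<circ> x) ` WW"
    by (rule image_eqI[where x=id]) (simp, rule gen.gen_id)
  show ?thesis unfolding wmin_def
  proof (rule the_equality)
    show "u \<in> (\<lambda>x. u \<circ> x) ` WW \<and> (\<forall>w\<in>(\<lambda>x. u \<circ> x) ` WW. bruhat (Wsimple cor P) (Wgrp Phi cor) u w)"
      using uin low by blast
    fix v assume "v \<in> (\<lambda>x. u \<circ> x) ` WW \<and> (\<forall>w\<in>(\<lambda>x. u \<circ> x) ` WW. bruhat (Wsimple cor P) (Wgrp Phi cor) v w)"
    then have "bruhat (Wsimple cor P) (Wgrp Phi cor) v u" "bruhat (Wsimple cor P) (Wgrp Phi cor) u v"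
      using uin low by blast+
    then show "v = u" by (rule bruhat_antisym)
  qed
qed

lemma coset_min:
  assumes c: "c \<in> gen RR"
  shows "\<exists>u x0. u \<in> gen RR \<and> (\<forall>a\<in>Psi \<inter> P. pi u a \<in> P) \<and>
            (\<lambda>x. u \<circ> x) ` WW = (\<lambda>x. c \<circ> x) ` WW \<and> x0 \<in> WW \<and> u = c \<circ> x0"
proof -
  obtain x0 where x0: "x0 \<in> WW" "\<And>y. y \<in> WW \<Longrightarrow> clen Ph.SS (c \<circ> x0) \<le> clen Ph.SS (c \<circ> y)"
    using ex_has_least_nat[of "\<lambda>x. x \<in> WW" id "\<lambda>x. clen Ph.SS (c \<circ> x)"] gen.gen_id by blast
  define u where "u = c \<circ> x0"
  have uR: "u \<in> gen RR" using gen_comp[OF c] x0(1) WW_RR u_def by blast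
  have pos: "\<forall>a\<in>Psi \<inter> P. pi u a \<in> P"
  proof (rule ballI, rule ccontr)
    fix a assume a: "a \<in> Psi \<inter> P" and n: "pi u a \<notin> P"
    have aP: "a \<in> Phi \<inter> P" "a \<in> Psi" using a PsiPhi by auto
    have "u \<in> gen Ph.SS" using uR RR_SS by simp
    then have "clen Ph.SS (u \<circ> rrefl cor a) < clen Ph.SS u" using Ph.len_dec[OF _ aP(1) n] by simp
    moreover have "x0 \<circ> rrefl cor a \<in> WW" using gen_comp[OF x0(1) gen_S[of "rrefl cor a"]] aP(2) by blast
    then have "clen Ph.SS (c \<circ> x0) \<le> clen Ph.SS (c \<circ> (x0 \<circ> rrefl cor a))" using x0(2) by blast
    ultimately show False using u_def by (simp add: comp_assoc)
  qed
  obtain x0' where x0': "x0' \<in> WW" "x0' \<circ> x0 = id" "x0 \<circ> x0' = id" using WW_inv[OF x0(1)] by blast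
  have "(\<lambda>x. u \<circ> x) ` WW = (\<lambda>x. c \<circ> x) ` WW"
  proof
    show "(\<lambda>x. u \<circ> x) ` WW \<subseteq> (\<lambda>x. c \<circ> x) ` WW"
    proof
      fix w assume "w \<in> (\<lambda>x. u \<circ> x) ` WW"
      then obtain x where x: "x \<in> WW" "w = u \<circ> x" by blast
      have "w = c \<circ> (x0 \<circ> x)" using x(2) u_def by (simp add: comp_assoc)
      moreover have "x0 \<circ> x \<in> WW" using gen_comp x0(1) x(1) by blast
      ultimately show "w \<in> (\<lambda>x. c \<circ> x) ` WW" by blast
    qed
    show "(\<lambda>x. c \<circ> x) ` WW \<subseteq> (\<lambda>x. u \<circ> x) ` WW"
    proof
      fix w assume "w \<in> (\<lambda>x. c \<circ> x) ` WW"
      then obtain x where x: "x \<in> WW" "w = c \<circ> x" by blast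
      have "w = u \<circ> (x0' \<circ> x)" using x(2) u_def x0'(3) by (metis comp_assoc id_comp)
      moreover have "x0' \<circ> x \<in> WW" using gen_comp x0'(1) x(1) by blast
      ultimately show "w \<in> (\<lambda>x. u \<circ> x) ` WW" by blast
    qed
  qed
  then show ?thesis using uR pos x0(1) u_def by blast
qed

end



context rd begin

lemma block_info:
  assumes tL: "tame_char p L" and tL': "tame_char p L'" and bl: "bt \<in> blocks Phi cor L' L"
  shows "\<exists>u. u \<in> gen RR \<and> bt = (\<lambda>x. u \<circ> x) ` Wo Phi cor L \<and> (\<forall>a\<in>PhiL Phi cor L \<inter> P. pi u a \<in> P)
           \<and> (\<forall>y. L' (u y) = L y) \<and> wmin Phi cor P bt = u"
proof -
  interpret S: sub Phi cor P f "PhiL Phi cor L" by (rule sub_L[OF tL])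
  obtain w where w: "bt = (\<lambda>x. w \<circ> x) ` Wo Phi cor L" "w \<in> Wgrp Phi cor" "act w L = L'"
    using bl unfolding blocks_def by blast
  have wR: "w \<in> gen RR" using w(2) by (simp add: Wgrp_def)
  have WoE: "Wo Phi cor L = S.WW" by (simp add: Wo_def)
  obtain u x0 where u: "u \<in> gen RR" "\<forall>a\<in>PhiL Phi cor L \<inter> P. pi u a \<in> P"
      "(\<lambda>x. u \<circ> x) ` S.WW = (\<lambda>x. w \<circ> x) ` S.WW" "x0 \<in> S.WW" "u = w \<circ> x0"
    using S.coset_min[OF wR] by blast
  have LL: "L' (u y) = L y" for y
  proof -
    have "L' (u y) = L (x0 y)" using act_fix[OF wR w(3)] u(5) by simp
    also have "\<dots> = L y" using Wo_fix[OF tL] u(4) WoE by simp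
    finally show ?thesis .
  qed
  have bu: "bt = (\<lambda>x. u \<circ> x) ` Wo Phi cor L" using w(1) u(3) WoE by simp
  have "wmin Phi cor P bt = u" unfolding bu WoE using S.wmin_char[OF u(1)] u(2) by blast
  then show ?thesis using u(1,2) LL bu by blast
qed

lemma decomp_back:
  assumes w: "w \<in> gen RR" and a: "a \<in> Phi" and b: "b \<in> Phi" and c: "c \<in> Phi"
    and e: "pi w a = (\<lambda>i. pi w b i + pi w c i)"
  shows "a = (\<lambda>i. b i + c i)"
proof (rule pair_ext)
  fix x
  have "pair a x = pair (pi w a) (w x)" using pi_props(3)[OF w a] by simp
  also have "\<dots> = pair (pi w b) (w x) + pair (pi w c) (w x)" unfolding e by simp
  also have "\<dots> = pair (\<lambda>i. b i + c i) x" using pi_props(3)[OF w b] pi_props(3)[OF w c] by simp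
  finally show "pair a x = pair (\<lambda>i. b i + c i) x" .
qed

lemma simple_map:
  assumes tL: "tame_char p L" and tL2: "tame_char p L2"
    and w: "w \<in> gen RR" and w': "w' \<in> gen RR" "w \<circ> w' = id" "w' \<circ> w = id"
    and LL: "\<And>y. L (w y) = L2 y" and pos: "\<forall>a\<in>PhiL Phi cor L2 \<inter> P. pi w a \<in> P"
  shows "(\<lambda>t. w' \<circ> t \<circ> w) ` SL Phi cor P L = SL Phi cor P L2"
proof -
  interpret S1: sub Phi cor P f "PhiL Phi cor L2" by (rule sub_L[OF tL2])
  interpret S2: sub Phi cor P f "PhiL Phi cor L" by (rule sub_L[OF tL])
  have LL': "L2 (w' y) = L y" for y using LL[of "w' y"] w'(2) by (metis comp_apply id_apply)
  have m1: "a \<in> PhiL Phi cor L2 \<Longrightarrow> pi w a \<in> PhiL Phi cor L" for a using pi_L[where L'=L and L=L2, OF w LL] by blast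
  have m2: "b \<in> PhiL Phi cor L \<Longrightarrow> pi w' b \<in> PhiL Phi cor L2" for b using pi_L[where L'=L2 and L=L, OF w'(1) LL'] by blast
  have inv1: "b \<in> Phi \<Longrightarrow> pi w (pi w' b) = b" for b
    using pi_comp[OF w w'(1)] w'(2) pi_id by metis
  have claimA: "b \<in> PhiL Phi cor L \<inter> P \<Longrightarrow> \<exists>a\<in>PhiL Phi cor L2 \<inter> P. pi w a = b" for b
  proof -
    assume b: "b \<in> PhiL Phi cor L \<inter> P"
    have bP: "b \<in> Phi" using b S2.PsiPhi by blast
    define a where "a = pi w' b"
    have aQ: "a \<in> PhiL Phi cor L2" using m2 b a_def by blast
    have aP: "a \<in> Phi" using aQ S1.PsiPhi by blast
    have wa: "pi w a = b" using inv1[OF bP] a_def by simp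
    have "a \<in> P"
    proof (rule ccontr)
      assume "a \<notin> P"
      then have "(\<lambda>i. - a i) \<in> PhiL Phi cor L2 \<inter> P" using negP[OF aP] S1.Psi_neg[OF aQ] by simp
      then have "pi w (\<lambda>i. - a i) \<in> P" using pos by blast
      moreover have "pi w (\<lambda>i. - a i) = (\<lambda>i. - b i)" using pi_neg[OF w aP] wa by simp
      ultimately show False using negP[OF bP] b by simp
    qed
    then show ?thesis using aQ wa by blast
  qed
  have i: "a \<in> simple_roots (PhiL Phi cor L2 \<inter> P) \<Longrightarrow> pi w a \<in> simple_roots (PhiL Phi cor L \<inter> P)" for a
  proof -
    assume a: "a \<in> simple_roots (PhiL Phi cor L2 \<inter> P)"
    have aQ: "a \<in> PhiL Phi cor L2 \<inter> P" and nd: "\<not> (\<exists>b\<in>PhiL Phi cor L2 \<inter> P. \<exists>c\<in>PhiL Phi cor L2 \<inter> P. a = (\<lambda>i. b i + c i))"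
      using a unfolding simple_roots_def by auto
    have aP: "a \<in> Phi" using aQ S1.PsiPhi by blast
    have wa: "pi w a \<in> PhiL Phi cor L \<inter> P" using m1 pos aQ by blast
    have "\<not> (\<exists>b'\<in>PhiL Phi cor L \<inter> P. \<exists>c'\<in>PhiL Phi cor L \<inter> P. pi w a = (\<lambda>i. b' i + c' i))"
    proof
      assume "\<exists>b'\<in>PhiL Phi cor L \<inter> P. \<exists>c'\<in>PhiL Phi cor L \<inter> P. pi w a = (\<lambda>i. b' i + c' i)"
      then obtain b' c' where bc: "b' \<in> PhiL Phi cor L \<inter> P" "c' \<in> PhiL Phi cor L \<inter> P"
        "pi w a = (\<lambda>i. b' i + c' i)" by blast
      obtain b where b: "b \<in> PhiL Phi cor L2 \<inter> P" "pi w b = b'" using claimA[OF bc(1)] by blast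
      obtain c where c: "c \<in> PhiL Phi cor L2 \<inter> P" "pi w c = c'" using claimA[OF bc(2)] by blast
      have "a = (\<lambda>i. b i + c i)"
        by (rule decomp_back[OF w aP]) (use b c bc S1.PsiPhi in auto)
      then show False using nd b c by blast
    qed
    then show ?thesis using wa unfolding simple_roots_def by blast
  qed
  have ii: "b \<in> simple_roots (PhiL Phi cor L \<inter> P) \<Longrightarrow> \<exists>a\<in>simple_roots (PhiL Phi cor L2 \<inter> P). pi w a = b" for b
  proof -
    assume b: "b \<in> simple_roots (PhiL Phi cor L \<inter> P)"
    have bQ: "b \<in> PhiL Phi cor L \<inter> P" and nd: "\<not> (\<exists>b1\<in>PhiL Phi cor L \<inter> P. \<exists>c1\<in>PhiL Phi cor L \<inter> P. b = (\<lambda>i. b1 i + c1 i))"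
      using b unfolding simple_roots_def by auto
    obtain a where a: "a \<in> PhiL Phi cor L2 \<inter> P" "pi w a = b" using claimA[OF bQ] by blast
    have "\<not> (\<exists>b1\<in>PhiL Phi cor L2 \<inter> P. \<exists>c1\<in>PhiL Phi cor L2 \<inter> P. a = (\<lambda>i. b1 i + c1 i))"
    proof
      assume "\<exists>b1\<in>PhiL Phi cor L2 \<inter> P. \<exists>c1\<in>PhiL Phi cor L2 \<inter> P. a = (\<lambda>i. b1 i + c1 i)"
      then obtain b1 c1 where bc: "b1 \<in> PhiL Phi cor L2 \<inter> P" "c1 \<in> PhiL Phi cor L2 \<inter> P"
        "a = (\<lambda>i. b1 i + c1 i)" by blast
      have "pi w a = (\<lambda>i. pi w b1 i + pi w c1 i)"
        by (rule pi_add[OF w]) (use a bc S1.PsiPhi in auto)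
      moreover have "pi w b1 \<in> PhiL Phi cor L \<inter> P" "pi w c1 \<in> PhiL Phi cor L \<inter> P"
        using m1 pos bc by blast+
      ultimately show False using nd a(2) by blast
    qed
    then show ?thesis using a unfolding simple_roots_def by blast
  qed
  have cj: "a \<in> Phi \<Longrightarrow> w' \<circ> rrefl cor (pi w a) \<circ> w = rrefl cor a" for a
  proof -
    assume aP: "a \<in> Phi"
    have "rrefl cor (pi w a) \<circ> w = w \<circ> rrefl cor a" using conj[OF w aP] by simp
    then show ?thesis using w'(3) by (metis comp_assoc id_comp)
  qed
  show ?thesis
  proof
    show "(\<lambda>t. w' \<circ> t \<circ> w) ` SL Phi cor P L \<subseteq> SL Phi cor P L2"
    proof
      fix x assume "x \<in> (\<lambda>t. w' \<circ> t \<circ> w) ` SL Phi cor P L"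
      then obtain b where b: "b \<in> simple_roots (PhiL Phi cor L \<inter> P)" "x = w' \<circ> rrefl cor b \<circ> w"
        unfolding SL_def by blast
      obtain a where a: "a \<in> simple_roots (PhiL Phi cor L2 \<inter> P)" "pi w a = b" using ii[OF b(1)] by blast
      have aP: "a \<in> Phi" using a(1) S1.PsiPhi unfolding simple_roots_def by blast
      have "x = rrefl cor a" using b(2) a(2) cj[OF aP] by simp
      then show "x \<in> SL Phi cor P L2" using a(1) unfolding SL_def by blast
    qed
    show "SL Phi cor P L2 \<subseteq> (\<lambda>t. w' \<circ> t \<circ> w) ` SL Phi cor P L"
    proof
      fix x assume "x \<in> SL Phi cor P L2"
      then obtain a where a: "a \<in> simple_roots (PhiL Phi cor L2 \<inter> P)" "x = rrefl cor a"
        unfolding SL_def by blast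
      have aP: "a \<in> Phi" using a(1) S1.PsiPhi unfolding simple_roots_def by blast
      have "rrefl cor (pi w a) \<in> SL Phi cor P L" using i[OF a(1)] unfolding SL_def by blast
      moreover have "x = w' \<circ> rrefl cor (pi w a) \<circ> w" using cj[OF aP] a(2) by simp
      ultimately show "x \<in> (\<lambda>t. w' \<circ> t \<circ> w) ` SL Phi cor P L" by blast
    qed
  qed
qed

end



theorem lemma4p8:
  fixes Phi :: "('n::finite \<Rightarrow> int) set" and cor :: "('n \<Rightarrow> int) \<Rightarrow> ('n \<Rightarrow> int)"
    and P :: "('n \<Rightarrow> int) set" and p :: nat
    and L L' L'' :: "('n \<Rightarrow> int) \<Rightarrow> complex"
    and \<beta> :: "(('n \<Rightarrow> int) \<Rightarrow> ('n \<Rightarrow> int)) set"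
  assumes "root_datum Phi cor" and "reduced_rd Phi" and "positive_system Phi P"
    and "prime p"
    and "tame_char p L" and "tame_char p L'" and "tame_char p L''"
    and "\<exists>w\<in>Wgrp Phi cor. act w L = L'" and "\<exists>w\<in>Wgrp Phi cor. act w L = L''"
    and "\<beta> \<in> blocks Phi cor L' L"
  shows "(\<forall>\<gamma>\<in>blocks Phi cor L'' L'.
            bij_betw (\<lambda>w. wmin Phi cor P \<gamma> \<circ> w) \<beta> (bprod \<gamma> \<beta>) \<and>
            (\<forall>u\<in>\<beta>. \<forall>w\<in>\<beta>. le_blk Phi cor P L \<beta> u w \<longleftrightarrow>
               le_blk Phi cor P L (bprod \<gamma> \<beta>) (wmin Phi cor P \<gamma> \<circ> u) (wmin Phi cor P \<gamma> \<circ> w)))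
       \<and> (\<forall>\<delta>\<in>blocks Phi cor L L''.
            bij_betw (\<lambda>w. w \<circ> wmin Phi cor P \<delta>) \<beta> (bprod \<beta> \<delta>) \<and>
            (\<forall>u\<in>\<beta>. \<forall>w\<in>\<beta>. le_blk Phi cor P L \<beta> u w \<longleftrightarrow>
               le_blk Phi cor P L'' (bprod \<beta> \<delta>) (u \<circ> wmin Phi cor P \<delta>) (w \<circ> wmin Phi cor P \<delta>)))
       \<and> (\<forall>w\<in>\<beta>. \<forall>w'\<in>\<beta>. le_blk Phi cor P L \<beta> w' w \<longrightarrow>
            bruhat (Wsimple cor P) (Wgrp Phi cor) w' w)"
proof -
  obtain f :: "'n \<Rightarrow> real" where f: "\<forall>a\<in>Phi. (\<Sum>i\<in>UNIV. f i * of_int (a i)) \<noteq> 0"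
      "P = {a\<in>Phi. (\<Sum>i\<in>UNIV. f i * of_int (a i)) > 0}"
    using assms(3) unfolding positive_system_def by blast
  interpret rd Phi cor P f by unfold_locales (use assms(1,2) f in auto)
  interpret S: sub Phi cor P f "PhiL Phi cor L" by (rule sub_L[OF assms(5)])
  interpret S2: sub Phi cor P f "PhiL Phi cor L''" by (rule sub_L[OF assms(7)])
  obtain wb where wb: "wb \<in> gen RR" "\<beta> = (\<lambda>x. wb \<circ> x) ` Wo Phi cor L"
      "\<forall>a\<in>PhiL Phi cor L \<inter> P. pi wb a \<in> P" "\<forall>y. L' (wb y) = L y" "wmin Phi cor P \<beta> = wb"
    using block_info[OF assms(5) assms(6) assms(10)] by blast
  obtain wb' where wb': "wb' \<in> gen RR" "wb' \<circ> wb = id" "wb \<circ> wb' = id" using W_inv[OF wb(1)] by blast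
  have WoL: "Wo Phi cor L = S.WW" by (simp add: Wo_def)
  have SLL: "SL Phi cor P L = S.SS" by (simp add: SL_def S.Dl_def)
  have WoLg: "Wo Phi cor L = gen (SL Phi cor P L)" using S.WW_eq WoL SLL by simp
  have WoL2: "Wo Phi cor L'' = S2.WW" by (simp add: Wo_def)
  have SLL2: "SL Phi cor P L'' = S2.SS" by (simp add: SL_def S2.Dl_def)
  have WoLg2: "Wo Phi cor L'' = gen (SL Phi cor P L'')" using S2.WW_eq WoL2 SLL2 by simp
  have injb: "wb \<circ> a = wb \<circ> b \<longleftrightarrow> a = b" for a b using W_inj[OF wb(1)] by blast

  have p3: "\<forall>w\<in>\<beta>. \<forall>w'\<in>\<beta>. le_blk Phi cor P L \<beta> w' w \<longrightarrow> bruhat (Wsimple cor P) (Wgrp Phi cor) w' w"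
  proof (intro ballI impI)
    fix w w' assume "le_blk Phi cor P L \<beta> w' w"
    then obtain x' x where xx: "w' = wb \<circ> x'" "w = wb \<circ> x" "bruhat (SL Phi cor P L) (Wo Phi cor L) x' x"
      unfolding le_blk_def wb(5) by blast
    have "bruhat (Wsimple cor P) (Wgrp Phi cor) (wb \<circ> x') (wb \<circ> x)"
      using S.part3core[OF wb(1)] wb(3) xx(3) WoL SLL by auto
    then show "bruhat (Wsimple cor P) (Wgrp Phi cor) w' w" using xx by simp
  qed

  have p1: "\<forall>\<gamma>\<in>blocks Phi cor L'' L'.
            bij_betw (\<lambda>w. wmin Phi cor P \<gamma> \<circ> w) \<beta> (bprod \<gamma> \<beta>) \<and>
            (\<forall>u\<in>\<beta>. \<forall>w\<in>\<beta>. le_blk Phi cor P L \<beta> u w \<longleftrightarrow>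
               le_blk Phi cor P L (bprod \<gamma> \<beta>) (wmin Phi cor P \<gamma> \<circ> u) (wmin Phi cor P \<gamma> \<circ> w))"
  proof
    fix \<gamma> assume g: "\<gamma> \<in> blocks Phi cor L'' L'"
    obtain wg where wg: "wg \<in> gen RR" "\<gamma> = (\<lambda>x. wg \<circ> x) ` Wo Phi cor L'"
        "\<forall>a\<in>PhiL Phi cor L' \<inter> P. pi wg a \<in> P" "\<forall>y. L'' (wg y) = L' y" "wmin Phi cor P \<gamma> = wg"
      using block_info[OF assms(6) assms(7) g] by blast
    define u where "u = wg \<circ> wb"
    have uR: "u \<in> gen RR" using gen_comp[OF wg(1) wb(1)] u_def by simp
    have upos: "\<forall>a\<in>PhiL Phi cor L \<inter> P. pi u a \<in> P"
    proof
      fix a assume a: "a \<in> PhiL Phi cor L \<inter> P"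
      have aP: "a \<in> Phi" using a S.PsiPhi by blast
      have "pi wb a \<in> PhiL Phi cor L'" using pi_L[where L'=L' and L=L, OF wb(1)] wb(4) a by blast
      moreover have "pi wb a \<in> P" using wb(3) a by blast
      ultimately have "pi wg (pi wb a) \<in> P" using wg(3) by blast
      then show "pi u a \<in> P" using pi_comp[OF wg(1) wb(1) aP] u_def by simp
    qed
    have bp: "bprod \<gamma> \<beta> = (\<lambda>x. u \<circ> x) ` Wo Phi cor L"
    proof
      show "bprod \<gamma> \<beta> \<subseteq> (\<lambda>x. u \<circ> x) ` Wo Phi cor L"
      proof
        fix z assume "z \<in> bprod \<gamma> \<beta>"
        then obtain g b where gb: "z = g \<circ> b" "g \<in> \<gamma>" "b \<in> \<beta>" unfolding bprod_def by blast
        obtain y where y: "y \<in> Wo Phi cor L'" "g = wg \<circ> y" using gb(2) wg(2) by blast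
        obtain x where x: "x \<in> Wo Phi cor L" "b = wb \<circ> x" using gb(3) wb(2) by blast
        have c: "wb' \<circ> y \<circ> wb \<in> Wo Phi cor L"
          using conj_Wo[of wb wb' L' L, OF wb(1) wb'(1) wb'(3) wb'(2)] wb(4) y(1) by blast
        have "z = u \<circ> ((wb' \<circ> y \<circ> wb) \<circ> x)"
          using gb(1) y(2) x(2) u_def wb'(3) by (metis comp_assoc id_comp)
        moreover have "(wb' \<circ> y \<circ> wb) \<circ> x \<in> Wo Phi cor L" unfolding Wo_def using gen_comp[OF c[unfolded Wo_def] x(1)[unfolded Wo_def]] .
        ultimately show "z \<in> (\<lambda>x. u \<circ> x) ` Wo Phi cor L" by blast
      qed
      show "(\<lambda>x. u \<circ> x) ` Wo Phi cor L \<subseteq> bprod \<gamma> \<beta>"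
      proof
        fix z assume "z \<in> (\<lambda>x. u \<circ> x) ` Wo Phi cor L"
        then obtain x where x: "x \<in> Wo Phi cor L" "z = u \<circ> x" by blast
        have "wg \<circ> id \<in> \<gamma>" using wg(2) gen.gen_id unfolding Wo_def by blast
        moreover have "wb \<circ> x \<in> \<beta>" using wb(2) x(1) by blast
        moreover have "z = (wg \<circ> id) \<circ> (wb \<circ> x)" using x(2) u_def by (simp add: comp_assoc)
        ultimately show "z \<in> bprod \<gamma> \<beta>" unfolding bprod_def by blast
      qed
    qed
    have wm: "wmin Phi cor P (bprod \<gamma> \<beta>) = u" unfolding bp WoL using S.wmin_char[OF uR] upos by blast
    have bij: "bij_betw (\<lambda>w. wmin Phi cor P \<gamma> \<circ> w) \<beta> (bprod \<gamma> \<beta>)"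
      unfolding wg(5) bij_betw_def
    proof
      show "inj_on (\<lambda>w. wg \<circ> w) \<beta>" using W_inj[OF wg(1)] by (auto simp: inj_on_def)
      show "(\<lambda>w. wg \<circ> w) ` \<beta> = bprod \<gamma> \<beta>" unfolding bp u_def
        by (simp add: wb(2) image_image comp_assoc)
    qed
    have key: "wg \<circ> v = u \<circ> x \<longleftrightarrow> v = wb \<circ> x" for v x
      using W_inj[OF wg(1), of v "wb \<circ> x"] u_def by (auto simp: comp_assoc)
    have ord: "\<forall>u1\<in>\<beta>. \<forall>w1\<in>\<beta>. le_blk Phi cor P L \<beta> u1 w1 \<longleftrightarrow>
               le_blk Phi cor P L (bprod \<gamma> \<beta>) (wmin Phi cor P \<gamma> \<circ> u1) (wmin Phi cor P \<gamma> \<circ> w1)"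
      unfolding le_blk_def wm wb(5) wg(5) key by blast
    show "bij_betw (\<lambda>w. wmin Phi cor P \<gamma> \<circ> w) \<beta> (bprod \<gamma> \<beta>) \<and>
            (\<forall>u\<in>\<beta>. \<forall>w\<in>\<beta>. le_blk Phi cor P L \<beta> u w \<longleftrightarrow>
               le_blk Phi cor P L (bprod \<gamma> \<beta>) (wmin Phi cor P \<gamma> \<circ> u) (wmin Phi cor P \<gamma> \<circ> w))"
      using bij ord by blast
  qed

  have p2: "\<forall>\<delta>\<in>blocks Phi cor L L''.
            bij_betw (\<lambda>w. w \<circ> wmin Phi cor P \<delta>) \<beta> (bprod \<beta> \<delta>) \<and>
            (\<forall>u\<in>\<beta>. \<forall>w\<in>\<beta>. le_blk Phi cor P L \<beta> u w \<longleftrightarrow>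
               le_blk Phi cor P L'' (bprod \<beta> \<delta>) (u \<circ> wmin Phi cor P \<delta>) (w \<circ> wmin Phi cor P \<delta>))"
  proof
    fix \<delta> assume d: "\<delta> \<in> blocks Phi cor L L''"
    obtain wd where wd: "wd \<in> gen RR" "\<delta> = (\<lambda>x. wd \<circ> x) ` Wo Phi cor L''"
        "\<forall>a\<in>PhiL Phi cor L'' \<inter> P. pi wd a \<in> P" "\<forall>y. L (wd y) = L'' y" "wmin Phi cor P \<delta> = wd"
      using block_info[OF assms(7) assms(5) d] by blast
    obtain wd' where wd': "wd' \<in> gen RR" "wd' \<circ> wd = id" "wd \<circ> wd' = id" using W_inv[OF wd(1)] by blast
    have LLd: "L (wd y) = L'' y" for y using wd(4) by blast
    have LLd': "L'' (wd' y) = L y" for y using LLd[of "wd' y"] wd'(3) by (metis comp_apply id_apply)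
    define u where "u = wb \<circ> wd"
    have uR: "u \<in> gen RR" using gen_comp[OF wb(1) wd(1)] u_def by simp
    have upos: "\<forall>a\<in>PhiL Phi cor L'' \<inter> P. pi u a \<in> P"
    proof
      fix a assume a: "a \<in> PhiL Phi cor L'' \<inter> P"
      have aP: "a \<in> Phi" using a S2.PsiPhi by blast
      have "pi wd a \<in> PhiL Phi cor L" using pi_L[where L'=L and L=L'', OF wd(1)] wd(4) a by blast
      moreover have "pi wd a \<in> P" using wd(3) a by blast
      ultimately have "pi wb (pi wd a) \<in> P" using wb(3) by blast
      then show "pi u a \<in> P" using pi_comp[OF wb(1) wd(1) aP] u_def by simp
    qed
    have c1: "x \<in> Wo Phi cor L \<Longrightarrow> wd' \<circ> x \<circ> wd \<in> Wo Phi cor L''" for x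
      using conj_Wo[of wd wd' L L'', OF wd(1) wd'(1) wd'(3) wd'(2)] LLd by blast
    have c2: "y \<in> Wo Phi cor L'' \<Longrightarrow> wd \<circ> y \<circ> wd' \<in> Wo Phi cor L" for y
      using conj_Wo[of wd' wd L'' L, OF wd'(1) wd(1) wd'(2) wd'(3)] LLd' by blast
    have e1: "(wb \<circ> x) \<circ> wd = u \<circ> (wd' \<circ> x \<circ> wd)" for x
      using u_def wd'(3) by (metis comp_assoc id_comp)
    have bp: "bprod \<beta> \<delta> = (\<lambda>x. u \<circ> x) ` Wo Phi cor L''"
    proof
      show "bprod \<beta> \<delta> \<subseteq> (\<lambda>x. u \<circ> x) ` Wo Phi cor L''"
      proof
        fix z assume "z \<in> bprod \<beta> \<delta>"
        then obtain b d where bd: "z = b \<circ> d" "b \<in> \<beta>" "d \<in> \<delta>" unfolding bprod_def by blast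
        obtain x where x: "x \<in> Wo Phi cor L" "b = wb \<circ> x" using bd(2) wb(2) by blast
        obtain y where y: "y \<in> Wo Phi cor L''" "d = wd \<circ> y" using bd(3) wd(2) by blast
        have "z = u \<circ> ((wd' \<circ> x \<circ> wd) \<circ> y)" using bd(1) x(2) y(2) e1 by (metis comp_assoc)
        moreover have "(wd' \<circ> x \<circ> wd) \<circ> y \<in> Wo Phi cor L''" unfolding Wo_def using gen_comp[OF c1[OF x(1), unfolded Wo_def] y(1)[unfolded Wo_def]] .
        ultimately show "z \<in> (\<lambda>x. u \<circ> x) ` Wo Phi cor L''" by blast
      qed
      show "(\<lambda>x. u \<circ> x) ` Wo Phi cor L'' \<subseteq> bprod \<beta> \<delta>"
      proof
        fix z assume "z \<in> (\<lambda>x. u \<circ> x) ` Wo Phi cor L''"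
        then obtain y where y: "y \<in> Wo Phi cor L''" "z = u \<circ> y" by blast
        have "wb \<circ> id \<in> \<beta>" using wb(2) gen.gen_id unfolding Wo_def by blast
        moreover have "wd \<circ> y \<in> \<delta>" using wd(2) y(1) by blast
        moreover have "z = (wb \<circ> id) \<circ> (wd \<circ> y)" using y(2) u_def by (simp add: comp_assoc)
        ultimately show "z \<in> bprod \<beta> \<delta>" unfolding bprod_def by blast
      qed
    qed
    have wm: "wmin Phi cor P (bprod \<beta> \<delta>) = u" unfolding bp WoL2 using S2.wmin_char[OF uR] upos by blast
    have bij: "bij_betw (\<lambda>w. w \<circ> wmin Phi cor P \<delta>) \<beta> (bprod \<beta> \<delta>)"
      unfolding wd(5) bij_betw_def
    proof
      show "inj_on (\<lambda>w. w \<circ> wd) \<beta>" using W_inj_r[OF wd(1)] by (auto simp: inj_on_def)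
      show "(\<lambda>w. w \<circ> wd) ` \<beta> = bprod \<beta> \<delta>"
      proof
        show "(\<lambda>w. w \<circ> wd) ` \<beta> \<subseteq> bprod \<beta> \<delta>"
        proof
          fix z assume "z \<in> (\<lambda>w. w \<circ> wd) ` \<beta>"
          then obtain x where x: "x \<in> Wo Phi cor L" "z = (wb \<circ> x) \<circ> wd" using wb(2) by blast
          then have "z = u \<circ> (wd' \<circ> x \<circ> wd)" using e1 by simp
          then show "z \<in> bprod \<beta> \<delta>" unfolding bp using c1[OF x(1)] by blast
        qed
        show "bprod \<beta> \<delta> \<subseteq> (\<lambda>w. w \<circ> wd) ` \<beta>"
        proof
          fix z assume "z \<in> bprod \<beta> \<delta>"
          then obtain y where y: "y \<in> Wo Phi cor L''" "z = u \<circ> y" unfolding bp by blast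
          have "z = (wb \<circ> (wd \<circ> y \<circ> wd')) \<circ> wd" using y(2) u_def wd'(2) by (metis comp_assoc comp_id)
          moreover have "wb \<circ> (wd \<circ> y \<circ> wd') \<in> \<beta>" using wb(2) c2[OF y(1)] by blast
          ultimately show "z \<in> (\<lambda>w. w \<circ> wd) ` \<beta>" by blast
        qed
      qed
    qed
    have img: "(\<lambda>t. wd' \<circ> t \<circ> wd) ` SL Phi cor P L = SL Phi cor P L''"
      using simple_map[OF assms(5) assms(7) wd(1) wd'(1) wd'(3) wd'(2) LLd] wd(3) by blast
    have tr: "bruhat (SL Phi cor P L) (Wo Phi cor L) a b \<longleftrightarrow>
              bruhat (SL Phi cor P L'') (Wo Phi cor L'') (wd' \<circ> a \<circ> wd) (wd' \<circ> b \<circ> wd)" for a b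
      unfolding WoLg WoLg2 by (rule bruhat_transport_iff[OF wd'(3) wd'(2) img])
    have injb: "wb \<circ> a = wb \<circ> b \<longleftrightarrow> a = b" for a b using W_inj[OF wb(1)] by blast
    have inju: "u \<circ> a = u \<circ> b \<longleftrightarrow> a = b" for a b using W_inj[OF uR] by blast
    have ord: "le_blk Phi cor P L \<beta> u1 w1 \<longleftrightarrow>
               le_blk Phi cor P L'' (bprod \<beta> \<delta>) (u1 \<circ> wd) (w1 \<circ> wd)" if u1: "u1 \<in> \<beta>" and w1: "w1 \<in> \<beta>" for u1 w1
    proof -
      obtain x1 where x1: "x1 \<in> Wo Phi cor L" "u1 = wb \<circ> x1" using u1 wb(2) by blast
      obtain x2 where x2: "x2 \<in> Wo Phi cor L" "w1 = wb \<circ> x2" using w1 wb(2) by blast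
      have "le_blk Phi cor P L \<beta> u1 w1 \<longleftrightarrow> bruhat (SL Phi cor P L) (Wo Phi cor L) x1 x2"
        unfolding le_blk_def wb(5) x1(2) x2(2) injb using x1(1) x2(1) by blast
      also have "\<dots> \<longleftrightarrow> bruhat (SL Phi cor P L'') (Wo Phi cor L'') (wd' \<circ> x1 \<circ> wd) (wd' \<circ> x2 \<circ> wd)"
        by (rule tr)
      also have "\<dots> \<longleftrightarrow> le_blk Phi cor P L'' (bprod \<beta> \<delta>) (u1 \<circ> wd) (w1 \<circ> wd)"
        unfolding le_blk_def wm x1(2) x2(2) e1 inju using c1[OF x1(1)] c1[OF x2(1)] by blast
      finally show ?thesis .
    qed
    show "bij_betw (\<lambda>w. w \<circ> wmin Phi cor P \<delta>) \<beta> (bprod \<beta> \<delta>) \<and>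
            (\<forall>u\<in>\<beta>. \<forall>w\<in>\<beta>. le_blk Phi cor P L \<beta> u w \<longleftrightarrow>
               le_blk Phi cor P L'' (bprod \<beta> \<delta>) (u \<circ> wmin Phi cor P \<delta>) (w \<circ> wmin Phi cor P \<delta>))"
      using bij ord wd(5) by simp
  qed
  show ?thesis using p1 p2 p3 by blast
qed


end
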